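(* Let $0<\nu<1$, $\rho>0$, $k_>\ge0$ and $0\le k_<<n/2$. Let $\bar f$ be either $ff_1$ or $f_0f_1$, and let $K$ be the Hilbert space of $u$ with $\|u;K\|=\|\bar f\widehat u\|_2<\infty$. Then $K$ is an algebra: there is a constant $C$ such that for all $u_1,u_2\in K$, $$\|u_1u_2;K\|\le C\|u_1;K\|\,\|u_2;K\|.$$ One can take $C^2=\int d\eta\,\bar f(\eta)^{-2}\big(1+2^{2k}f_0(\eta)^{2\nu}\big)$ with $k=k_<\vee k_>$, and this integral converges.
   Context: On $\mathbb{R}^n$: $f_0(\xi)=\exp(\rho|\xi|^\nu)$, $f(\xi)=\exp(\rho(|\xi|^\nu\vee1))$, $f_1(\xi)=|\xi|_>^{k_>}+|\xi|_<^{k_<}$, where $|\xi|_>^m=|\xi|^m$ for $|\xi|>1$ and $0$ otherwise, $|\xi|_<^m=|\xi|^m$ for $|\xi|\le1$ and $0$ otherwise. $\widehat u$ denotes the Fourier transform and $\|\cdot\|_2$ the $L^2$ norm. *)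

theory Defs
  imports "HOL-Analysis.Analysis"
begin

text \<open>Weights on R^n (R^n rendered as real^'n). |xi|^m is read as 1 when m = 0
  (also at xi = 0), as is customary.\<close>

definition rpow :: "real \<Rightarrow> real \<Rightarrow> real" where
  "rpow r m = (if m = 0 then 1 else r powr m)"

definition f0 :: "real \<Rightarrow> real \<Rightarrow> real^'n \<Rightarrow> real" where
  "f0 \<rho> \<nu> \<xi> = exp (\<rho> * rpow (norm \<xi>) \<nu>)"

definition ff :: "real \<Rightarrow> real \<Rightarrow> real^'n \<Rightarrow> real" where
  "ff \<rho> \<nu> \<xi> = exp (\<rho> * max (rpow (norm \<xi>) \<nu>) 1)"

definition f1 :: "real \<Rightarrow> real \<Rightarrow> real^'n \<Rightarrow> real" where
  "f1 kg kl \<xi> =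
     (if norm \<xi> > 1 then rpow (norm \<xi>) kg else 0) +
     (if norm \<xi> \<le> 1 then rpow (norm \<xi>) kl else 0)"

text \<open>Inverse Fourier transform, convention  u(x) = \<integral> g(\<xi>) e^{2\<pi> i x\<cdot>\<xi>} d\<xi>,
  i.e. \<^emph>\<open>u\<close>-hat(\<xi>) = \<integral> u(x) e^{-2\<pi> i x\<cdot>\<xi>} dx.\<close>

definition inv_fourier :: "(real^'n \<Rightarrow> complex) \<Rightarrow> real^'n \<Rightarrow> complex" where
  "inv_fourier g x = (LINT \<xi>|lborel. g \<xi> * cis (2 * pi * (x \<bullet> \<xi>)))"

definition wnorm :: "(real^'n \<Rightarrow> real) \<Rightarrow> (real^'n \<Rightarrow> complex) \<Rightarrow> real" where
  "wnorm fb g = sqrt (LINT \<xi>|lborel. (fb \<xi> * cmod (g \<xi>))\<^sup>2)"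

text \<open>u belongs to K with Fourier transform g: g measurable, fbar g in L^2, and u is the
  inverse Fourier transform of g (g is automatically in L^1, so u is a genuine function).\<close>

definition in_K_with :: "(real^'n \<Rightarrow> real) \<Rightarrow> (real^'n \<Rightarrow> complex) \<Rightarrow> (real^'n \<Rightarrow> complex) \<Rightarrow> bool" where
  "in_K_with fb u g \<longleftrightarrow> g \<in> borel_measurable lborel \<and>
      integrable lborel (\<lambda>\<xi>. (fb \<xi> * cmod (g \<xi>))\<^sup>2) \<and>
      (\<forall>x. u x = inv_fourier g x)"

end

theory Submission
  imports Defs
begin


lemma bern_powr:
  fixes t \<nu> :: real
  assumes "0 < \<nu>" "\<nu> < 1" "0 \<le> t"
  shows "(1 + t) powr \<nu> \<le> 1 + \<nu> * t"
  using Youngs_inequality_0[of \<nu> "1 - \<nu>" "1 + t" 1] assms by (simp add: algebra_simps)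

lemma concave_step:
  fixes a b c \<nu> :: real
  assumes "0 < \<nu>" "\<nu> < 1" "0 \<le> b" "b \<le> a" "0 \<le> c" "c \<le> a + b"
  shows "c powr \<nu> \<le> a powr \<nu> + \<nu> * b powr \<nu>"
proof (cases "a = 0")
  case True then have "b = 0" "c = 0" using assms by auto
  then show ?thesis using True by simp
next
  case False
  then have a: "a > 0" using assms by auto
  have "c powr \<nu> \<le> (a + b) powr \<nu>" using assms by (intro powr_mono2) auto
  also have "a + b = a * (1 + b / a)" using a by (simp add: field_simps)
  also have "(a * (1 + b / a)) powr \<nu> = a powr \<nu> * (1 + b/a) powr \<nu>"
    using a assms by (simp add: powr_mult)
  also have "\<dots> \<le> a powr \<nu> * (1 + \<nu> * (b/a))"
    using bern_powr[of \<nu> "b/a"] assms a by (intro mult_left_mono) auto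
  also have "\<dots> = a powr \<nu> + \<nu> * (a powr \<nu> * (b / a))" by (simp add: algebra_simps)
  also have "a powr \<nu> * (b / a) \<le> b powr \<nu>"
  proof (cases "b = 0")
    case True then show ?thesis by simp
  next
    case False
    then have b: "b > 0" using assms by auto
    have "a powr \<nu> * (b / a) = b powr \<nu> * (b / a) powr (1 - \<nu>)"
      using a b by (simp add: powr_diff powr_divide field_simps powr_minus)
    also have "(b / a) powr (1 - \<nu>) \<le> 1"
      using a b assms by (intro powr_le1) (auto simp: field_simps)
    finally show ?thesis using b by (simp add: mult_left_le)
  qed
  finally show ?thesis using assms by (simp add: mult_left_mono)
qed

definition PP :: "bool \<Rightarrow> real \<Rightarrow> real \<Rightarrow> real" where
  "PP s \<nu> r = (if s then max (rpow r \<nu>) 1 else rpow r \<nu>)"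

definition F1r :: "real \<Rightarrow> real \<Rightarrow> real \<Rightarrow> real" where
  "F1r kg kl r = (if r > 1 then rpow r kg else 0) + (if r \<le> 1 then rpow r kl else 0)"

definition FB :: "bool \<Rightarrow> real \<Rightarrow> real \<Rightarrow> real \<Rightarrow> real \<Rightarrow> real \<Rightarrow> real" where
  "FB s \<rho> \<nu> kg kl r = exp (\<rho> * PP s \<nu> r) * F1r kg kl r"

lemma rpow_pos: "r > 0 \<Longrightarrow> rpow r m = r powr m"
  by (simp add: rpow_def)

lemma rpow_nu: "\<nu> \<noteq> 0 \<Longrightarrow> rpow r \<nu> = r powr \<nu>"
  by (simp add: rpow_def)

lemma rpow_nonneg: "0 \<le> rpow r m"
  by (simp add: rpow_def)

lemma F1r_nonneg: "0 \<le> F1r kg kl r"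
  by (simp add: F1r_def rpow_nonneg)

lemma F1r_pos: "r > 0 \<Longrightarrow> 0 < F1r kg kl r"
  by (simp add: F1r_def rpow_pos)

lemma rpow_le1: "0 \<le> r \<Longrightarrow> r \<le> 1 \<Longrightarrow> 0 \<le> m \<Longrightarrow> rpow r m \<le> 1"
  by (auto simp: rpow_def intro: powr_le1)

lemma rpow_ge1: "1 \<le> r \<Longrightarrow> 0 \<le> m \<Longrightarrow> 1 \<le> rpow r m"
  by (auto simp: rpow_def ge_one_powr_ge_zero)

lemma rpow_mono: "0 \<le> c \<Longrightarrow> c \<le> a \<Longrightarrow> 0 \<le> m \<Longrightarrow> rpow c m \<le> rpow a m"
  by (auto simp: rpow_def intro: powr_mono2)

lemma F1r_mono:
  assumes "0 \<le> c" "c \<le> a" "0 \<le> kg" "0 \<le> kl"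
  shows "F1r kg kl c \<le> F1r kg kl a"
  using assms rpow_mono[of c a kl] rpow_mono[of c a kg] rpow_le1[of c kl] rpow_ge1[of a kg]
  by (auto simp: F1r_def)

lemma F1r_double:
  assumes "0 \<le> c" "c \<le> 2 * a" "0 \<le> kg" "0 \<le> kl"
  shows "F1r kg kl c \<le> 2 powr (max kl kg) * F1r kg kl a"
proof -
  let ?k = "max kl kg"
  have K1: "1 \<le> (2::real) powr ?k" using assms by (simp add: ge_one_powr_ge_zero)
  have Kl: "(2::real) powr kl \<le> 2 powr ?k" by (intro powr_mono) auto
  have Kg: "(2::real) powr kg \<le> 2 powr ?k" by (intro powr_mono) auto
  show ?thesis
  proof (cases "c = 0")
    case True
    have "F1r kg kl c \<le> 1" using True assms by (simp add: F1r_def rpow_def)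
    moreover have "F1r kg kl c \<le> 0 \<or> kl = 0" using True assms by (auto simp: F1r_def rpow_def)
    moreover have "kl = 0 \<Longrightarrow> 1 \<le> F1r kg kl a"
      using assms rpow_ge1[of a kg] by (auto simp: F1r_def rpow_def)
    moreover have "0 \<le> 2 powr ?k * F1r kg kl a" by (simp add: F1r_nonneg)
    ultimately show ?thesis using K1
      by (smt (verit, best) mult_less_cancel_right2)
  next
    case False
    then have c: "c > 0" using assms by auto
    then have a: "a > 0" using assms by auto
    have ca: "c powr m \<le> 2 powr m * a powr m" if "0 \<le> m" for m
    proof -
      have "c powr m \<le> (2 * a) powr m" using assms c that by (intro powr_mono2) auto
      then show ?thesis by (simp add: powr_mult)
    qed
    consider "c \<le> 1" "a \<le> 1" | "c \<le> 1" "a > 1" | "c > 1" "a > 1" | "c > 1" "a \<le> 1" by linarith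
    then show ?thesis
    proof cases
      case 1
      then have "F1r kg kl c = c powr kl" "F1r kg kl a = a powr kl" using a c by (auto simp: F1r_def rpow_pos)
      then show ?thesis using ca[of kl] assms Kl
        by (smt (verit) mult_right_mono powr_ge_zero)
    next
      case 2
      then have "F1r kg kl c \<le> 1" using c assms rpow_le1 by (auto simp: F1r_def)
      moreover have "1 \<le> F1r kg kl a" using 2 assms rpow_ge1 by (auto simp: F1r_def)
      ultimately show ?thesis using K1
        by (smt (verit) mult_le_cancel_right1)
    next
      case 3
      then have "F1r kg kl c = c powr kg" "F1r kg kl a = a powr kg" using a c by (auto simp: F1r_def rpow_pos)
      then show ?thesis using ca[of kg] assms Kg
        by (smt (verit) mult_right_mono powr_ge_zero)
    next
      case 4
      then have eq: "F1r kg kl c = c powr kg" "F1r kg kl a = a powr kl" using a c by (auto simp: F1r_def rpow_pos)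
      show ?thesis
      proof (cases "kl \<le> kg")
        case True
        have "c powr kg \<le> 2 powr kg * a powr kg" using ca assms by simp
        also have "a powr kg \<le> a powr kl" using 4 a True by (simp add: powr_mono')
        finally have "c powr kg \<le> 2 powr kg * a powr kl" by (simp add: mult_left_mono)
        then show ?thesis using eq Kg by (smt (verit) mult_right_mono powr_ge_zero)
      next
        case False
        have "c powr kg \<le> c powr kl" using 4 False by (intro powr_mono) auto
        also have "\<dots> \<le> 2 powr kl * a powr kl" using ca assms by simp
        finally show ?thesis using eq Kl by (smt (verit) mult_right_mono powr_ge_zero)
      qed
    qed
  qed
qed

lemma PP_nonneg: "0 \<le> PP s \<nu> r"
  by (auto simp: PP_def rpow_nonneg)

lemma PP_mono:
  assumes "0 < \<nu>" "0 \<le> c" "c \<le> a"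
  shows "PP s \<nu> c \<le> PP s \<nu> a"
  using assms rpow_mono[of c a \<nu>] by (auto simp: PP_def)

lemma PP_step:
  assumes "0 < \<nu>" "\<nu> < 1" "0 \<le> b" "b \<le> a" "0 \<le> c" "c \<le> a + b"
  shows "PP s \<nu> c \<le> PP s \<nu> a + \<nu> * b powr \<nu>"
proof -
  have *: "c powr \<nu> \<le> a powr \<nu> + \<nu> * b powr \<nu>" using concave_step assms by blast
  have "0 \<le> \<nu> * b powr \<nu>" using assms by simp
  moreover have "\<nu> \<noteq> 0" using assms by simp
  ultimately show ?thesis using * unfolding PP_def rpow_nu[OF \<open>\<nu> \<noteq> 0\<close>]
    by (smt (verit))
qed

lemma FB_nonneg: "0 \<le> FB s \<rho> \<nu> kg kl r"
  by (simp add: FB_def F1r_nonneg)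

lemma FB_pos: "r > 0 \<Longrightarrow> 0 < FB s \<rho> \<nu> kg kl r"
  by (simp add: FB_def F1r_pos)

lemma FB_mono:
  assumes "0 < \<nu>" "0 < \<rho>" "0 \<le> kg" "0 \<le> kl" "0 \<le> c" "c \<le> a"
  shows "FB s \<rho> \<nu> kg kl c \<le> FB s \<rho> \<nu> kg kl a"
  unfolding FB_def
  using assms PP_mono[of \<nu> c a s] F1r_mono[of c a kg kl]
  by (intro mult_mono) (auto simp: F1r_nonneg)

lemma FB_step:
  assumes "0 < \<nu>" "\<nu> < 1" "0 < \<rho>" "0 \<le> kg" "0 \<le> kl"
    "0 \<le> b" "b \<le> a" "0 \<le> c" "c \<le> a + b"
  shows "FB s \<rho> \<nu> kg kl c \<le> 2 powr (max kl kg) * exp (\<rho> * \<nu> * b powr \<nu>) * FB s \<rho> \<nu> kg kl a"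
proof -
  have "\<rho> * PP s \<nu> c \<le> \<rho> * (PP s \<nu> a + \<nu> * b powr \<nu>)"
    using PP_step[OF assms(1,2,6-9), of s] assms(3) by (intro mult_left_mono) auto
  then have e: "exp (\<rho> * PP s \<nu> c) \<le> exp (\<rho> * \<nu> * b powr \<nu>) * exp (\<rho> * PP s \<nu> a)"
    by (simp add: mult_exp_exp algebra_simps)
  have f: "F1r kg kl c \<le> 2 powr (max kl kg) * F1r kg kl a"
    using assms by (intro F1r_double) auto
  have "FB s \<rho> \<nu> kg kl c \<le> (exp (\<rho> * \<nu> * b powr \<nu>) * exp (\<rho> * PP s \<nu> a)) * (2 powr (max kl kg) * F1r kg kl a)"
    unfolding FB_def using e f by (intro mult_mono) (auto simp: F1r_nonneg)
  then show ?thesis by (simp add: FB_def algebra_simps)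
qed



lemma nn_reflect_shift:
  fixes f :: "'a::euclidean_space \<Rightarrow> ennreal"
  assumes [measurable]: "f \<in> borel_measurable borel"
  shows "(\<integral>\<^sup>+x. f (t - x) \<partial>lborel) = (\<integral>\<^sup>+x. f x \<partial>lborel)"
proof -
  have eq: "lborel = density (distr lborel borel (\<lambda>x. t + (-1) *\<^sub>R x)) (\<lambda>_. \<bar>-1::real\<bar>^DIM('a))"
    by (rule lborel_affine) simp
  have "(\<integral>\<^sup>+x. f x \<partial>lborel) = (\<integral>\<^sup>+x. f x \<partial>density (distr lborel borel (\<lambda>x. t + (-1) *\<^sub>R x)) (\<lambda>_. \<bar>-1::real\<bar>^DIM('a)))"
    using eq by (rule arg_cong[where f="\<lambda>M. integral\<^sup>N M f"])
  also have "\<dots> = (\<integral>\<^sup>+x. f (t - x) \<partial>lborel)"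
    by (simp add: nn_integral_density nn_integral_distr)
  finally show ?thesis ..
qed

lemma nn_shift:
  fixes f :: "'a::euclidean_space \<Rightarrow> ennreal"
  assumes [measurable]: "f \<in> borel_measurable borel"
  shows "(\<integral>\<^sup>+x. f (x - t) \<partial>lborel) = (\<integral>\<^sup>+x. f x \<partial>lborel)"
proof -
  have "(\<integral>\<^sup>+x. f x \<partial>lborel) = (\<integral>\<^sup>+x. f x \<partial>distr lborel borel ((+) (-t)))"
    using lborel_distr_plus[of "-t", symmetric] by (rule arg_cong[where f="\<lambda>M. integral\<^sup>N M f"])
  also have "\<dots> = (\<integral>\<^sup>+x. f (x - t) \<partial>lborel)"
    by (simp add: nn_integral_distr)
  finally show ?thesis ..
qed

lemma nn_reflect:
  fixes f :: "'a::euclidean_space \<Rightarrow> ennreal"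
  assumes [measurable]: "f \<in> borel_measurable borel"
  shows "(\<integral>\<^sup>+x. f (- x) \<partial>lborel) = (\<integral>\<^sup>+x. f x \<partial>lborel)"
  using nn_reflect_shift[OF assms, of 0] by simp

lemma W_aux:
  fixes A B C M :: real
  assumes "0 < A" "0 < B" "0 \<le> C" "C \<le> M * A"
  shows "(C * inverse A * inverse B)\<^sup>2 \<le> M\<^sup>2 * inverse (B\<^sup>2)"
proof -
  have "0 \<le> C * inverse A * inverse B" using assms by simp
  moreover have "C * inverse A * inverse B \<le> M * inverse B"
    using assms by (simp add: field_simps)
  ultimately have "(C * inverse A * inverse B)\<^sup>2 \<le> (M * inverse B)\<^sup>2"
    by (intro power_mono) auto
  then show ?thesis by (simp add: power_mult_distrib power_inverse)
qed

lemma W_aux2: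
  fixes A B C M :: real
  assumes "0 < A" "0 < B" "0 \<le> C" "C \<le> M * B"
  shows "(C * inverse A * inverse B)\<^sup>2 \<le> M\<^sup>2 * inverse (A\<^sup>2)"
proof -
  have e: "C * inverse A * inverse B = C * inverse B * inverse A" by simp
  show ?thesis unfolding e by (rule W_aux[OF assms(2,1,3,4)])
qed

lemma exp_sq: "(exp (y::real))\<^sup>2 = exp (2 * y)"
  by (simp add: power2_eq_square mult_exp_exp)

definition "goodPhi \<Phi> K \<theta> \<nu> \<longleftrightarrow> \<Phi> \<in> borel_measurable borel \<and> (\<forall>r. 0 \<le> \<Phi> r) \<and> (\<forall>r>0. 0 < \<Phi> r)
   \<and> (\<forall>c a. 0 \<le> c \<longrightarrow> c \<le> a \<longrightarrow> \<Phi> c \<le> \<Phi> a)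
   \<and> (\<forall>a b c. 0 \<le> b \<longrightarrow> b \<le> a \<longrightarrow> 0 \<le> c \<longrightarrow> c \<le> a + b \<longrightarrow> \<Phi> c \<le> K * exp (\<theta> * b powr \<nu>) * \<Phi> a)"

lemma W_pointwise:
  fixes \<xi> \<eta> :: "'a::euclidean_space"
  assumes G: "goodPhi \<Phi> K \<theta> \<nu>" and K: "0 \<le> K"
  defines "h0 \<equiv> \<lambda>x::'a. inverse ((\<Phi> (norm x))\<^sup>2)"
  defines "X \<equiv> \<lambda>x::'a. inverse ((\<Phi> (norm x))\<^sup>2) * K\<^sup>2 * exp (2 * \<theta> * norm x powr \<nu>)"
  shows "(\<Phi> (norm \<xi>) * inverse (\<Phi> (norm \<eta>)) * inverse (\<Phi> (norm (\<xi> - \<eta>))))\<^sup>2 \<le>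
     h0 (\<xi> - \<eta>) * (if (\<xi> - \<eta>) \<bullet> \<xi> \<le> 0 then 1 else 0)
   + h0 \<eta> * (if \<eta> \<bullet> \<xi> < 0 then 1 else 0)
   + X (\<xi> - \<eta>) * (if (\<xi> - \<eta>) \<bullet> \<xi> > 0 \<and> norm (\<xi> - \<eta>) \<le> norm (\<xi> - (\<xi> - \<eta>)) then 1 else 0)
   + X \<eta> * (if \<eta> \<bullet> \<xi> \<ge> 0 \<and> norm \<eta> < norm (\<xi> - \<eta>) then 1 else 0)"
  (is "?W\<^sup>2 \<le> ?R")
proof -
  define \<zeta> where "\<zeta> = \<xi> - \<eta>"
  have nn: "\<And>r. 0 \<le> \<Phi> r" and pos: "\<And>r. r > 0 \<Longrightarrow> 0 < \<Phi> r"
    and mono: "\<And>c a. 0 \<le> c \<Longrightarrow> c \<le> a \<Longrightarrow> \<Phi> c \<le> \<Phi> a"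
    and step: "\<And>a b c. 0 \<le> b \<Longrightarrow> b \<le> a \<Longrightarrow> 0 \<le> c \<Longrightarrow> c \<le> a + b \<Longrightarrow> \<Phi> c \<le> K * exp (\<theta> * b powr \<nu>) * \<Phi> a"
    using G unfolding goodPhi_def by auto
  have h0nn: "0 \<le> h0 x" for x by (simp add: h0_def)
  have Xnn: "0 \<le> X x" for x using K nn by (simp add: X_def)
  have Rnn: "0 \<le> ?R" using h0nn Xnn by (intro add_nonneg_nonneg) auto
  show ?thesis
  proof (cases "\<Phi> (norm \<eta>) = 0 \<or> \<Phi> (norm \<zeta>) = 0")
    case True
    then have e: "?W = 0" by (auto simp: \<zeta>_def)
    show ?thesis unfolding e using Rnn by simp
  next
    case False
    then have pa: "0 < \<Phi> (norm \<eta>)" and pb: "0 < \<Phi> (norm \<zeta>)"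
      using nn[of "norm \<eta>"] nn[of "norm \<zeta>"] by (auto simp: less_le)
    have eta_eq: "\<eta> = \<xi> - \<zeta>" by (simp add: \<zeta>_def)
    have na: "(norm \<eta>)\<^sup>2 = (norm \<xi>)\<^sup>2 - 2 * (\<zeta> \<bullet> \<xi>) + (norm \<zeta>)\<^sup>2"
      unfolding eta_eq using dot_norm_neg[of \<xi> \<zeta>] by (simp add: inner_commute)
    have nb: "(norm \<zeta>)\<^sup>2 = (norm \<xi>)\<^sup>2 - 2 * (\<eta> \<bullet> \<xi>) + (norm \<eta>)\<^sup>2"
      unfolding \<zeta>_def using dot_norm_neg[of \<xi> \<eta>] by (simp add: inner_commute)
    have tri: "norm \<xi> \<le> norm \<eta> + norm \<zeta>"
      using norm_triangle_ineq[of \<eta> \<zeta>] by (simp add: \<zeta>_def)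
    consider "\<zeta> \<bullet> \<xi> \<le> 0" | "\<not> \<zeta> \<bullet> \<xi> \<le> 0" "\<eta> \<bullet> \<xi> < 0"
      | "\<zeta> \<bullet> \<xi> > 0" "\<eta> \<bullet> \<xi> \<ge> 0" "norm \<zeta> \<le> norm \<eta>"
      | "\<zeta> \<bullet> \<xi> > 0" "\<eta> \<bullet> \<xi> \<ge> 0" "norm \<eta> < norm \<zeta>" by linarith
    then show ?thesis
    proof cases
      case 1
      have "(norm \<xi>)\<^sup>2 \<le> (norm \<eta>)\<^sup>2" using 1 na zero_le_power2[of "norm \<zeta>"] by linarith
      then have "norm \<xi> \<le> norm \<eta>" by (rule power2_le_imp_le) simp
      then have le: "\<Phi> (norm \<xi>) \<le> 1 * \<Phi> (norm \<eta>)" using mono[OF norm_ge_zero] by simp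
      have "?W\<^sup>2 \<le> 1\<^sup>2 * inverse ((\<Phi> (norm \<zeta>))\<^sup>2)"
        unfolding \<zeta>_def[symmetric] by (rule W_aux[OF pa pb nn le])
      also have "\<dots> = h0 (\<xi> - \<eta>) * (if (\<xi> - \<eta>) \<bullet> \<xi> \<le> 0 then 1 else 0)"
        using 1 by (simp add: h0_def \<zeta>_def)
      also have "\<dots> \<le> ?R" by (simp add: h0nn Xnn)
      finally show ?thesis .
    next
      case 2
      have "(norm \<xi>)\<^sup>2 \<le> (norm \<zeta>)\<^sup>2" using 2 nb zero_le_power2[of "norm \<eta>"] by linarith
      then have "norm \<xi> \<le> norm \<zeta>" by (rule power2_le_imp_le) simp
      then have le: "\<Phi> (norm \<xi>) \<le> 1 * \<Phi> (norm \<zeta>)" using mono[OF norm_ge_zero] by simp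
      have "?W\<^sup>2 \<le> 1\<^sup>2 * inverse ((\<Phi> (norm \<eta>))\<^sup>2)"
        unfolding \<zeta>_def[symmetric] by (rule W_aux2[OF pa pb nn le])
      also have "\<dots> = h0 \<eta> * (if \<eta> \<bullet> \<xi> < 0 then 1 else 0)"
        using 2 by (simp add: h0_def)
      also have "\<dots> \<le> ?R" by (simp add: h0nn Xnn)
      finally show ?thesis .
    next
      case 3
      have le: "\<Phi> (norm \<xi>) \<le> (K * exp (\<theta> * norm \<zeta> powr \<nu>)) * \<Phi> (norm \<eta>)"
        using step[of "norm \<zeta>" "norm \<eta>" "norm \<xi>"] 3 tri by simp
      have "?W\<^sup>2 \<le> (K * exp (\<theta> * norm \<zeta> powr \<nu>))\<^sup>2 * inverse ((\<Phi> (norm \<zeta>))\<^sup>2)"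
        unfolding \<zeta>_def[symmetric] by (rule W_aux[OF pa pb nn le])
      also have "\<dots> = X \<zeta>"
        unfolding X_def power_mult_distrib exp_sq by (simp only: ac_simps)
      also have "\<dots> = X (\<xi> - \<eta>) * (if (\<xi> - \<eta>) \<bullet> \<xi> > 0 \<and> norm (\<xi> - \<eta>) \<le> norm (\<xi> - (\<xi> - \<eta>)) then 1 else 0)"
        using 3 by (simp add: \<zeta>_def)
      also have "\<dots> \<le> ?R" by (simp add: h0nn Xnn)
      finally show ?thesis .
    next
      case 4
      have le: "\<Phi> (norm \<xi>) \<le> (K * exp (\<theta> * norm \<eta> powr \<nu>)) * \<Phi> (norm \<zeta>)"
        using step[of "norm \<eta>" "norm \<zeta>" "norm \<xi>"] 4 tri by simp
      have "?W\<^sup>2 \<le> (K * exp (\<theta> * norm \<eta> powr \<nu>))\<^sup>2 * inverse ((\<Phi> (norm \<eta>))\<^sup>2)"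
        unfolding \<zeta>_def[symmetric] by (rule W_aux2[OF pa pb nn le])
      also have "\<dots> = X \<eta>"
        unfolding X_def power_mult_distrib exp_sq by (simp only: ac_simps)
      also have "\<dots> = X \<eta> * (if \<eta> \<bullet> \<xi> \<ge> 0 \<and> norm \<eta> < norm (\<xi> - \<eta>) then 1 else 0)"
        using 4 by (simp add: \<zeta>_def)
      also have "\<dots> \<le> ?R" by (simp add: h0nn Xnn)
      finally show ?thesis .
    qed
  qed
qed



lemma W_integral:
  fixes \<xi> :: "'a::euclidean_space"
  assumes G: "goodPhi \<Phi> K \<theta> \<nu>" and K: "0 \<le> K"
  defines "h0 \<equiv> \<lambda>x::'a. inverse ((\<Phi> (norm x))\<^sup>2)"
  defines "X \<equiv> \<lambda>x::'a. inverse ((\<Phi> (norm x))\<^sup>2) * K\<^sup>2 * exp (2 * \<theta> * norm x powr \<nu>)"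
  shows "(\<integral>\<^sup>+\<eta>. ennreal ((\<Phi> (norm \<xi>) * inverse (\<Phi> (norm \<eta>)) * inverse (\<Phi> (norm (\<xi> - \<eta>))))\<^sup>2) \<partial>lborel)
    \<le> (\<integral>\<^sup>+x. ennreal (h0 x) \<partial>lborel) + (\<integral>\<^sup>+x. ennreal (X x) \<partial>lborel)"
proof -
  have [measurable]: "\<Phi> \<in> borel_measurable borel" using G by (simp add: goodPhi_def)
  have nn: "\<And>r. 0 \<le> \<Phi> r" using G by (simp add: goodPhi_def)
  have h0nn: "0 \<le> h0 x" for x by (simp add: h0_def)
  have Xnn: "0 \<le> X x" for x using K nn by (simp add: X_def)
  have [measurable]: "h0 \<in> borel_measurable borel" unfolding h0_def by measurable
  have [measurable]: "X \<in> borel_measurable borel" unfolding X_def by measurable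
  define f1 where "f1 = (\<lambda>x. ennreal (h0 x * (if x \<bullet> \<xi> \<le> 0 then 1 else 0)))"
  define f2 where "f2 = (\<lambda>x. ennreal (h0 x * (if x \<bullet> \<xi> < 0 then 1 else 0)))"
  define f3 where "f3 = (\<lambda>x. ennreal (X x * (if x \<bullet> \<xi> > 0 \<and> norm x \<le> norm (\<xi> - x) then 1 else 0)))"
  define f4 where "f4 = (\<lambda>x. ennreal (X x * (if x \<bullet> \<xi> \<ge> 0 \<and> norm x < norm (\<xi> - x) then 1 else 0)))"
  have [measurable]: "f1 \<in> borel_measurable borel" "f2 \<in> borel_measurable borel"
    "f3 \<in> borel_measurable borel" "f4 \<in> borel_measurable borel"
    unfolding f1_def f2_def f3_def f4_def by measurable
  have "(\<integral>\<^sup>+\<eta>. ennreal ((\<Phi> (norm \<xi>) * inverse (\<Phi> (norm \<eta>)) * inverse (\<Phi> (norm (\<xi> - \<eta>))))\<^sup>2) \<partial>lborel)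
      \<le> (\<integral>\<^sup>+\<eta>. f1 (\<xi> - \<eta>) + f2 \<eta> + f3 (\<xi> - \<eta>) + f4 \<eta> \<partial>lborel)"
  proof (rule nn_integral_mono)
    fix \<eta> :: 'a
    have "ennreal ((\<Phi> (norm \<xi>) * inverse (\<Phi> (norm \<eta>)) * inverse (\<Phi> (norm (\<xi> - \<eta>))))\<^sup>2)
       \<le> ennreal (h0 (\<xi> - \<eta>) * (if (\<xi> - \<eta>) \<bullet> \<xi> \<le> 0 then 1 else 0)
   + h0 \<eta> * (if \<eta> \<bullet> \<xi> < 0 then 1 else 0)
   + X (\<xi> - \<eta>) * (if (\<xi> - \<eta>) \<bullet> \<xi> > 0 \<and> norm (\<xi> - \<eta>) \<le> norm (\<xi> - (\<xi> - \<eta>)) then 1 else 0)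
   + X \<eta> * (if \<eta> \<bullet> \<xi> \<ge> 0 \<and> norm \<eta> < norm (\<xi> - \<eta>) then 1 else 0))"
      using W_pointwise[OF G K, of \<xi> \<eta>] unfolding h0_def X_def by (rule ennreal_leI)
    also have "\<dots> = f1 (\<xi> - \<eta>) + f2 \<eta> + f3 (\<xi> - \<eta>) + f4 \<eta>"
      unfolding f1_def f2_def f3_def f4_def using h0nn Xnn
      by (simp add: ennreal_plus[symmetric] add_nonneg_nonneg del: ennreal_plus)
    finally show "ennreal ((\<Phi> (norm \<xi>) * inverse (\<Phi> (norm \<eta>)) * inverse (\<Phi> (norm (\<xi> - \<eta>))))\<^sup>2)
       \<le> f1 (\<xi> - \<eta>) + f2 \<eta> + f3 (\<xi> - \<eta>) + f4 \<eta>" .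
  qed
  also have "\<dots> = (\<integral>\<^sup>+\<eta>. f1 (\<xi> - \<eta>) \<partial>lborel) + (\<integral>\<^sup>+\<eta>. f2 \<eta> \<partial>lborel)
      + (\<integral>\<^sup>+\<eta>. f3 (\<xi> - \<eta>) \<partial>lborel) + (\<integral>\<^sup>+\<eta>. f4 \<eta> \<partial>lborel)"
    by (simp add: nn_integral_add)
  also have "(\<integral>\<^sup>+\<eta>. f1 (\<xi> - \<eta>) \<partial>lborel) = (\<integral>\<^sup>+\<eta>. f1 \<eta> \<partial>lborel)"
    by (rule nn_reflect_shift) measurable
  also have "(\<integral>\<^sup>+\<eta>. f3 (\<xi> - \<eta>) \<partial>lborel) = (\<integral>\<^sup>+\<eta>. f3 \<eta> \<partial>lborel)"
    by (rule nn_reflect_shift) measurable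
  also have "(\<integral>\<^sup>+\<eta>. f2 \<eta> \<partial>lborel) = (\<integral>\<^sup>+\<eta>. f2 (- \<eta>) \<partial>lborel)"
    by (rule nn_reflect[symmetric]) measurable
  also have "(\<integral>\<^sup>+\<eta>. f4 \<eta> \<partial>lborel) = (\<integral>\<^sup>+\<eta>. f4 (- \<eta>) \<partial>lborel)"
    by (rule nn_reflect[symmetric]) measurable
  also have "(\<integral>\<^sup>+\<eta>. f1 \<eta> \<partial>lborel) + (\<integral>\<^sup>+\<eta>. f2 (- \<eta>) \<partial>lborel) = (\<integral>\<^sup>+\<eta>. f1 \<eta> + f2 (- \<eta>) \<partial>lborel)"
    by (simp add: nn_integral_add)
  also have "(\<integral>\<^sup>+\<eta>. f1 \<eta> + f2 (- \<eta>) \<partial>lborel) = (\<integral>\<^sup>+x. ennreal (h0 x) \<partial>lborel)"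
  proof (rule nn_integral_cong)
    fix x :: 'a
    have "h0 (- x) = h0 x" by (simp add: h0_def)
    then show "f1 x + f2 (- x) = ennreal (h0 x)"
      unfolding f1_def f2_def using h0nn[of x] by auto
  qed
  also have "(\<integral>\<^sup>+x. ennreal (h0 x) \<partial>lborel) + (\<integral>\<^sup>+\<eta>. f3 \<eta> \<partial>lborel) + (\<integral>\<^sup>+\<eta>. f4 (- \<eta>) \<partial>lborel)
     = (\<integral>\<^sup>+x. ennreal (h0 x) \<partial>lborel) + (\<integral>\<^sup>+\<eta>. f3 \<eta> + f4 (- \<eta>) \<partial>lborel)"
    by (simp add: nn_integral_add add.assoc)
  also have "(\<integral>\<^sup>+\<eta>. f3 \<eta> + f4 (- \<eta>) \<partial>lborel) \<le> (\<integral>\<^sup>+x. ennreal (X x) \<partial>lborel)"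
  proof (rule nn_integral_mono)
    fix x :: 'a
    have "X (- x) = X x" by (simp add: X_def)
    then show "f3 x + f4 (- x) \<le> ennreal (X x)"
      unfolding f3_def f4_def using Xnn[of x] by auto
  qed
  finally show ?thesis by (simp add: add_left_mono)
qed



lemma Phi_facts:
  assumes "goodPhi \<Phi> K \<theta> \<nu>"
  shows "\<Phi> \<in> borel_measurable borel" "\<And>r. 0 \<le> \<Phi> r" "\<And>r. r > 0 \<Longrightarrow> 0 < \<Phi> r"
  using assms unfolding goodPhi_def by auto

lemma L1_bound:
  fixes g :: "'a::euclidean_space \<Rightarrow> complex"
  assumes G: "goodPhi \<Phi> K \<theta> \<nu>" and [measurable]: "g \<in> borel_measurable borel"
    and fh: "(\<integral>\<^sup>+x. ennreal (inverse ((\<Phi> (norm x))\<^sup>2)) \<partial>(lborel::'a measure)) < \<infinity>"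
    and fN: "(\<integral>\<^sup>+x. ennreal ((\<Phi> (norm x) * cmod (g x))\<^sup>2) \<partial>(lborel::'a measure)) < \<infinity>"
  shows "(\<integral>\<^sup>+x. ennreal (cmod (g x)) \<partial>(lborel::'a measure)) < \<infinity>"
proof -
  note Phi_facts[OF G]
  note [measurable] = \<open>\<Phi> \<in> borel_measurable borel\<close>
  have "(\<integral>\<^sup>+x. ennreal (cmod (g x)) \<partial>(lborel::'a measure))
      = (\<integral>\<^sup>+x. ennreal (inverse (\<Phi> (norm x))) * ennreal (\<Phi> (norm x) * cmod (g x)) \<partial>(lborel::'a measure))"
  proof (rule nn_integral_cong_AE)
    show "AE x in lborel. ennreal (cmod (g x)) = ennreal (inverse (\<Phi> (norm x))) * ennreal (\<Phi> (norm x) * cmod (g x))"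
      using AE_lborel_singleton[of 0]
    proof eventually_elim
      case (elim x)
      then have "0 < \<Phi> (norm x)" using Phi_facts(3)[OF G] by simp
      then show ?case by (simp add: ennreal_mult[symmetric])
    qed
  qed
  also have "\<dots> < \<infinity>"
  proof -
    have "(\<integral>\<^sup>+x. ennreal (inverse (\<Phi> (norm x))) * ennreal (\<Phi> (norm x) * cmod (g x)) \<partial>(lborel::'a measure))\<^sup>2
       \<le> (\<integral>\<^sup>+x. (ennreal (inverse (\<Phi> (norm x))))\<^sup>2 \<partial>(lborel::'a measure)) * (\<integral>\<^sup>+x. (ennreal (\<Phi> (norm x) * cmod (g x)))\<^sup>2 \<partial>(lborel::'a measure))"
      by (rule Cauchy_Schwarz_nn_integral) measurable
    also have "(\<integral>\<^sup>+x. (ennreal (inverse (\<Phi> (norm x))))\<^sup>2 \<partial>(lborel::'a measure)) = (\<integral>\<^sup>+x. ennreal (inverse ((\<Phi> (norm x))\<^sup>2)) \<partial>(lborel::'a measure))"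
      using Phi_facts(2)[OF G] by (simp add: ennreal_power power_inverse)
    also have "(\<integral>\<^sup>+x. (ennreal (\<Phi> (norm x) * cmod (g x)))\<^sup>2 \<partial>(lborel::'a measure)) = (\<integral>\<^sup>+x. ennreal ((\<Phi> (norm x) * cmod (g x))\<^sup>2) \<partial>(lborel::'a measure))"
      using Phi_facts(2)[OF G] by (simp add: ennreal_power)
    also have "(\<integral>\<^sup>+x. ennreal (inverse ((\<Phi> (norm x))\<^sup>2)) \<partial>(lborel::'a measure)) * (\<integral>\<^sup>+x. ennreal ((\<Phi> (norm x) * cmod (g x))\<^sup>2) \<partial>(lborel::'a measure)) < \<infinity>"
      using fh fN by (simp add: ennreal_mult_less_top)
    finally show ?thesis by (simp add: power_less_top_ennreal)
  qed
  finally show ?thesis .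
qed

lemma conv_pointwise:
  fixes g1 g2 :: "'a::euclidean_space \<Rightarrow> complex" and \<xi> :: 'a
  assumes G: "goodPhi \<Phi> K \<theta> \<nu>" and K: "0 \<le> K"
    and [measurable]: "g1 \<in> borel_measurable borel" "g2 \<in> borel_measurable borel"
  shows "ennreal ((\<Phi> (norm \<xi>) * cmod (LINT \<eta>|lborel. g1 \<eta> * g2 (\<xi> - \<eta>)))\<^sup>2) \<le>
     ((\<integral>\<^sup>+x. ennreal (inverse ((\<Phi> (norm x))\<^sup>2)) \<partial>(lborel::'a measure)) +
      (\<integral>\<^sup>+x. ennreal (inverse ((\<Phi> (norm x))\<^sup>2) * K\<^sup>2 * exp (2 * \<theta> * norm x powr \<nu>)) \<partial>(lborel::'a measure)))
     * (\<integral>\<^sup>+\<eta>. ennreal ((\<Phi> (norm \<eta>) * cmod (g1 \<eta>) * (\<Phi> (norm (\<xi> - \<eta>)) * cmod (g2 (\<xi> - \<eta>))))\<^sup>2) \<partial>(lborel::'a measure))"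
proof -
  note [measurable] = Phi_facts(1)[OF G]
  have nn: "\<And>r. 0 \<le> \<Phi> r" and pos: "\<And>r. r > 0 \<Longrightarrow> 0 < \<Phi> r" using Phi_facts[OF G] by auto
  define W where "W = (\<lambda>\<eta>::'a. \<Phi> (norm \<xi>) * inverse (\<Phi> (norm \<eta>)) * inverse (\<Phi> (norm (\<xi> - \<eta>))))"
  define H where "H = (\<lambda>\<eta>::'a. \<Phi> (norm \<eta>) * cmod (g1 \<eta>) * (\<Phi> (norm (\<xi> - \<eta>)) * cmod (g2 (\<xi> - \<eta>))))"
  have [measurable]: "W \<in> borel_measurable borel" "H \<in> borel_measurable borel"
    unfolding W_def H_def by measurable
  have Wnn: "0 \<le> W \<eta>" for \<eta> using nn by (simp add: W_def)
  have Hnn: "0 \<le> H \<eta>" for \<eta> using nn by (simp add: H_def)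
  define C2e where "C2e = (\<integral>\<^sup>+x. ennreal (inverse ((\<Phi> (norm x))\<^sup>2)) \<partial>(lborel::'a measure)) +
      (\<integral>\<^sup>+x. ennreal (inverse ((\<Phi> (norm x))\<^sup>2) * K\<^sup>2 * exp (2 * \<theta> * norm x powr \<nu>)) \<partial>(lborel::'a measure))"
  have s1: "ennreal (cmod (LINT \<eta>|lborel. g1 \<eta> * g2 (\<xi> - \<eta>))) \<le> (\<integral>\<^sup>+\<eta>. ennreal (cmod (g1 \<eta>) * cmod (g2 (\<xi> - \<eta>))) \<partial>(lborel::'a measure))"
  proof (cases "integrable lborel (\<lambda>\<eta>::'a. g1 \<eta> * g2 (\<xi> - \<eta>))")
    case True
    then show ?thesis using integral_norm_bound_ennreal[OF True] by (simp add: norm_mult)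
  next
    case False
    then show ?thesis by (simp add: not_integrable_integral_eq)
  qed
  have "ennreal (\<Phi> (norm \<xi>) * cmod (LINT \<eta>|lborel. g1 \<eta> * g2 (\<xi> - \<eta>)))
      = ennreal (\<Phi> (norm \<xi>)) * ennreal (cmod (LINT \<eta>|lborel. g1 \<eta> * g2 (\<xi> - \<eta>)))"
    using nn by (simp add: ennreal_mult)
  also have "\<dots> \<le> ennreal (\<Phi> (norm \<xi>)) * (\<integral>\<^sup>+\<eta>. ennreal (cmod (g1 \<eta>) * cmod (g2 (\<xi> - \<eta>))) \<partial>(lborel::'a measure))"
    using s1 by (rule mult_left_mono) simp
  also have "\<dots> = (\<integral>\<^sup>+\<eta>. ennreal (\<Phi> (norm \<xi>)) * ennreal (cmod (g1 \<eta>) * cmod (g2 (\<xi> - \<eta>))) \<partial>(lborel::'a measure))"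
    by (rule nn_integral_cmult[symmetric]) measurable
  also have "\<dots> = (\<integral>\<^sup>+\<eta>. ennreal (W \<eta>) * ennreal (H \<eta>) \<partial>(lborel::'a measure))"
  proof (rule nn_integral_cong_AE)
    show "AE \<eta> in lborel. ennreal (\<Phi> (norm \<xi>)) * ennreal (cmod (g1 \<eta>) * cmod (g2 (\<xi> - \<eta>))) = ennreal (W \<eta>) * ennreal (H \<eta>)"
      using AE_lborel_singleton[of 0] AE_lborel_singleton[of \<xi>]
    proof eventually_elim
      case (elim \<eta>)
      then have p1: "0 < \<Phi> (norm \<eta>)" and p2: "0 < \<Phi> (norm (\<xi> - \<eta>))" using pos by auto
      have "W \<eta> * H \<eta> = \<Phi> (norm \<xi>) * (cmod (g1 \<eta>) * cmod (g2 (\<xi> - \<eta>)))"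
        unfolding W_def H_def using p1 p2 by (simp add: field_simps)
      then show ?case using nn Wnn Hnn by (simp add: ennreal_mult[symmetric])
    qed
  qed
  finally have le1: "ennreal (\<Phi> (norm \<xi>) * cmod (LINT \<eta>|lborel. g1 \<eta> * g2 (\<xi> - \<eta>)))
      \<le> (\<integral>\<^sup>+\<eta>. ennreal (W \<eta>) * ennreal (H \<eta>) \<partial>(lborel::'a measure))" .
  have "ennreal ((\<Phi> (norm \<xi>) * cmod (LINT \<eta>|lborel. g1 \<eta> * g2 (\<xi> - \<eta>)))\<^sup>2)
      = (ennreal (\<Phi> (norm \<xi>) * cmod (LINT \<eta>|lborel. g1 \<eta> * g2 (\<xi> - \<eta>))))\<^sup>2"
    using nn by (simp add: ennreal_power)
  also have "\<dots> \<le> (\<integral>\<^sup>+\<eta>. ennreal (W \<eta>) * ennreal (H \<eta>) \<partial>(lborel::'a measure))\<^sup>2"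
    using le1 by (rule power_mono) simp
  also have "\<dots> \<le> (\<integral>\<^sup>+\<eta>. (ennreal (W \<eta>))\<^sup>2 \<partial>(lborel::'a measure)) * (\<integral>\<^sup>+\<eta>. (ennreal (H \<eta>))\<^sup>2 \<partial>(lborel::'a measure))"
    by (rule Cauchy_Schwarz_nn_integral) measurable
  also have "(\<integral>\<^sup>+\<eta>. (ennreal (W \<eta>))\<^sup>2 \<partial>(lborel::'a measure)) = (\<integral>\<^sup>+\<eta>. ennreal ((W \<eta>)\<^sup>2) \<partial>(lborel::'a measure))"
    using Wnn by (simp add: ennreal_power)
  also have "(\<integral>\<^sup>+\<eta>. ennreal ((W \<eta>)\<^sup>2) \<partial>(lborel::'a measure)) \<le> C2e"
    unfolding W_def C2e_def by (rule W_integral[OF G K])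
  also have "(\<integral>\<^sup>+\<eta>. (ennreal (H \<eta>))\<^sup>2 \<partial>(lborel::'a measure)) = (\<integral>\<^sup>+\<eta>. ennreal ((H \<eta>)\<^sup>2) \<partial>(lborel::'a measure))"
    using Hnn by (simp add: ennreal_power)
  finally show ?thesis unfolding C2e_def H_def by (simp add: mult_right_mono)
qed



lemma conv_meas:
  fixes g1 g2 :: "'a::euclidean_space \<Rightarrow> complex"
  assumes [measurable]: "g1 \<in> borel_measurable borel" "g2 \<in> borel_measurable borel"
  shows "(\<lambda>\<xi>. LINT \<eta>|(lborel::'a measure). g1 \<eta> * g2 (\<xi> - \<eta>)) \<in> borel_measurable borel"
  by measurable

lemma conv_L2:
  fixes g1 g2 :: "'a::euclidean_space \<Rightarrow> complex"
  assumes G: "goodPhi \<Phi> K \<theta> \<nu>" and K: "0 \<le> K"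
    and [measurable]: "g1 \<in> borel_measurable borel" "g2 \<in> borel_measurable borel"
  shows "(\<integral>\<^sup>+\<xi>. ennreal ((\<Phi> (norm \<xi>) * cmod (LINT \<eta>|lborel. g1 \<eta> * g2 (\<xi> - \<eta>)))\<^sup>2) \<partial>(lborel::'a measure)) \<le>
     ((\<integral>\<^sup>+x. ennreal (inverse ((\<Phi> (norm x))\<^sup>2)) \<partial>(lborel::'a measure)) +
      (\<integral>\<^sup>+x. ennreal (inverse ((\<Phi> (norm x))\<^sup>2) * K\<^sup>2 * exp (2 * \<theta> * norm x powr \<nu>)) \<partial>(lborel::'a measure)))
     * (\<integral>\<^sup>+x. ennreal ((\<Phi> (norm x) * cmod (g1 x))\<^sup>2) \<partial>(lborel::'a measure))
     * (\<integral>\<^sup>+x. ennreal ((\<Phi> (norm x) * cmod (g2 x))\<^sup>2) \<partial>(lborel::'a measure))"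
proof -
  note [measurable] = Phi_facts(1)[OF G]
  have nn: "\<And>r. 0 \<le> \<Phi> r" using Phi_facts[OF G] by auto
  define C2e where "C2e = (\<integral>\<^sup>+x. ennreal (inverse ((\<Phi> (norm x))\<^sup>2)) \<partial>(lborel::'a measure)) +
      (\<integral>\<^sup>+x. ennreal (inverse ((\<Phi> (norm x))\<^sup>2) * K\<^sup>2 * exp (2 * \<theta> * norm x powr \<nu>)) \<partial>(lborel::'a measure))"
  define F1 where "F1 = (\<lambda>x::'a. \<Phi> (norm x) * cmod (g1 x))"
  define F2 where "F2 = (\<lambda>x::'a. \<Phi> (norm x) * cmod (g2 x))"
  have [measurable]: "F1 \<in> borel_measurable borel" "F2 \<in> borel_measurable borel"
    unfolding F1_def F2_def by measurable
  have F1nn: "0 \<le> F1 x" and F2nn: "0 \<le> F2 x" for x using nn by (auto simp: F1_def F2_def)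
  have "(\<integral>\<^sup>+\<xi>. ennreal ((\<Phi> (norm \<xi>) * cmod (LINT \<eta>|lborel. g1 \<eta> * g2 (\<xi> - \<eta>)))\<^sup>2) \<partial>(lborel::'a measure))
     \<le> (\<integral>\<^sup>+\<xi>. C2e * (\<integral>\<^sup>+\<eta>. ennreal ((F1 \<eta> * F2 (\<xi> - \<eta>))\<^sup>2) \<partial>(lborel::'a measure)) \<partial>(lborel::'a measure))"
    by (rule nn_integral_mono) (unfold C2e_def F1_def F2_def, rule conv_pointwise[OF G K], measurable)
  also have "\<dots> = C2e * (\<integral>\<^sup>+\<xi>. (\<integral>\<^sup>+\<eta>. ennreal ((F1 \<eta> * F2 (\<xi> - \<eta>))\<^sup>2) \<partial>(lborel::'a measure)) \<partial>(lborel::'a measure))"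
    by (rule nn_integral_cmult) measurable
  also have "(\<integral>\<^sup>+\<xi>. (\<integral>\<^sup>+\<eta>. ennreal ((F1 \<eta> * F2 (\<xi> - \<eta>))\<^sup>2) \<partial>(lborel::'a measure)) \<partial>(lborel::'a measure))
      = (\<integral>\<^sup>+\<eta>. (\<integral>\<^sup>+\<xi>. ennreal ((F1 \<eta> * F2 (\<xi> - \<eta>))\<^sup>2) \<partial>(lborel::'a measure)) \<partial>(lborel::'a measure))"
    by (rule lborel_pair.Fubini') measurable
  also have "\<dots> = (\<integral>\<^sup>+\<eta>. ennreal ((F1 \<eta>)\<^sup>2) * (\<integral>\<^sup>+x. ennreal ((F2 x)\<^sup>2) \<partial>(lborel::'a measure)) \<partial>(lborel::'a measure))"
  proof (rule nn_integral_cong)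
    fix \<eta> :: 'a
    have "(\<integral>\<^sup>+\<xi>. ennreal ((F1 \<eta> * F2 (\<xi> - \<eta>))\<^sup>2) \<partial>(lborel::'a measure))
        = (\<integral>\<^sup>+\<xi>. ennreal ((F1 \<eta>)\<^sup>2) * ennreal ((F2 (\<xi> - \<eta>))\<^sup>2) \<partial>(lborel::'a measure))"
      by (simp add: power_mult_distrib ennreal_mult)
    also have "\<dots> = ennreal ((F1 \<eta>)\<^sup>2) * (\<integral>\<^sup>+\<xi>. ennreal ((F2 (\<xi> - \<eta>))\<^sup>2) \<partial>(lborel::'a measure))"
      by (rule nn_integral_cmult) measurable
    also have "(\<integral>\<^sup>+\<xi>. ennreal ((F2 (\<xi> - \<eta>))\<^sup>2) \<partial>(lborel::'a measure)) = (\<integral>\<^sup>+x. ennreal ((F2 x)\<^sup>2) \<partial>(lborel::'a measure))"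
      by (rule nn_shift[of "\<lambda>x. ennreal ((F2 x)\<^sup>2)"]) measurable
    finally show "(\<integral>\<^sup>+\<xi>. ennreal ((F1 \<eta> * F2 (\<xi> - \<eta>))\<^sup>2) \<partial>(lborel::'a measure))
        = ennreal ((F1 \<eta>)\<^sup>2) * (\<integral>\<^sup>+x. ennreal ((F2 x)\<^sup>2) \<partial>(lborel::'a measure))" .
  qed
  also have "\<dots> = (\<integral>\<^sup>+\<eta>. ennreal ((F1 \<eta>)\<^sup>2) \<partial>(lborel::'a measure)) * (\<integral>\<^sup>+x. ennreal ((F2 x)\<^sup>2) \<partial>(lborel::'a measure))"
    by (rule nn_integral_multc) measurable
  finally show ?thesis unfolding C2e_def F1_def F2_def by (simp add: mult.assoc)
qed



lemma int_shift:
  fixes f :: "'a::euclidean_space \<Rightarrow> 'b::{banach, second_countable_topology}"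
  assumes [measurable]: "f \<in> borel_measurable borel"
  shows "(LINT x|lborel. f (x - t)) = (LINT x|lborel. f x)"
proof -
  have "(LINT x|lborel. f x) = (LINT x|distr lborel borel ((+) (-t)). f x)"
    using lborel_distr_plus[of "-t", symmetric] by (rule arg_cong[where f="\<lambda>M. integral\<^sup>L M f"])
  also have "\<dots> = (LINT x|lborel. f (x - t))"
    by (subst integral_distr) auto
  finally show ?thesis ..
qed

lemma cis_meas[measurable]: "(\<lambda>t::'a::euclidean_space. cis (2 * pi * (x \<bullet> t))) \<in> borel_measurable borel"
  by (intro borel_measurable_continuous_onI continuous_intros)

lemma fourier_conv:
  fixes g1 g2 :: "real^'n \<Rightarrow> complex"
  assumes [measurable]: "g1 \<in> borel_measurable borel" "g2 \<in> borel_measurable borel"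
    and L1: "(\<integral>\<^sup>+x. ennreal (cmod (g1 x)) \<partial>lborel) < \<infinity>" "(\<integral>\<^sup>+x. ennreal (cmod (g2 x)) \<partial>lborel) < \<infinity>"
  shows "inv_fourier g1 x * inv_fourier g2 x = inv_fourier (\<lambda>\<xi>. LINT \<eta>|lborel. g1 \<eta> * g2 (\<xi> - \<eta>)) x"
proof -
  define c where "c = (\<lambda>t::real^'n. cis (2 * pi * (x \<bullet> t)))"
  have [measurable]: "c \<in> borel_measurable borel" unfolding c_def by measurable
  have nc: "cmod (c t) = 1" for t by (simp add: c_def)
  have cc: "c \<eta> * c (\<xi> - \<eta>) = c \<xi>" for \<xi> \<eta> by (simp add: c_def cis_mult inner_diff_right algebra_simps)
  define F where "F = (\<lambda>\<xi> \<eta>::real^'n. g1 \<eta> * g2 (\<xi> - \<eta>) * c \<xi>)"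
  have Fm[measurable]: "(\<lambda>(\<xi>, \<eta>). F \<xi> \<eta>) \<in> borel_measurable (lborel \<Otimes>\<^sub>M lborel)"
    unfolding F_def by measurable
  have "inv_fourier g1 x * inv_fourier g2 x = (LINT \<eta>|lborel. g1 \<eta> * c \<eta>) * (LINT \<zeta>|lborel. g2 \<zeta> * c \<zeta>)"
    by (simp add: inv_fourier_def c_def)
  also have "\<dots> = (LINT \<eta>|lborel. (g1 \<eta> * c \<eta>) * (LINT \<zeta>|lborel. g2 \<zeta> * c \<zeta>))"
    by simp
  also have "\<dots> = (LINT \<eta>|lborel. (LINT \<zeta>|lborel. (g1 \<eta> * c \<eta>) * (g2 \<zeta> * c \<zeta>)))"
    by simp
  also have "\<dots> = (LINT \<eta>|lborel. (LINT \<xi>|lborel. F \<xi> \<eta>))"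
  proof (rule Bochner_Integration.integral_cong[OF refl])
    fix \<eta> :: "real^'n"
    have "(LINT \<zeta>|lborel. (g1 \<eta> * c \<eta>) * (g2 \<zeta> * c \<zeta>)) = (LINT \<xi>|lborel. (g1 \<eta> * c \<eta>) * (g2 (\<xi> - \<eta>) * c (\<xi> - \<eta>)))"
      by (rule int_shift[symmetric, of "\<lambda>\<zeta>. (g1 \<eta> * c \<eta>) * (g2 \<zeta> * c \<zeta>)"]) measurable
    also have "\<dots> = (LINT \<xi>|lborel. F \<xi> \<eta>)"
    proof (rule Bochner_Integration.integral_cong[OF refl])
      fix \<xi> :: "real^'n"
      have "(g1 \<eta> * c \<eta>) * (g2 (\<xi> - \<eta>) * c (\<xi> - \<eta>)) = g1 \<eta> * g2 (\<xi> - \<eta>) * (c \<eta> * c (\<xi> - \<eta>))"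
        by (simp add: ac_simps)
      then show "(g1 \<eta> * c \<eta>) * (g2 (\<xi> - \<eta>) * c (\<xi> - \<eta>)) = F \<xi> \<eta>"
        unfolding F_def cc .
    qed
    finally show "(LINT \<zeta>|lborel. (g1 \<eta> * c \<eta>) * (g2 \<zeta> * c \<zeta>)) = (LINT \<xi>|lborel. F \<xi> \<eta>)" .
  qed
  also have "\<dots> = (LINT \<xi>|lborel. (LINT \<eta>|lborel. F \<xi> \<eta>))"
  proof (rule lborel_pair.Fubini_integral)
    show "integrable (lborel \<Otimes>\<^sub>M lborel) (\<lambda>(\<xi>, \<eta>). F \<xi> \<eta>)"
    proof (rule integrableI_bounded)
      show "(\<lambda>(\<xi>, \<eta>). F \<xi> \<eta>) \<in> borel_measurable (lborel \<Otimes>\<^sub>M lborel)" by (rule Fm)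
      have "(\<integral>\<^sup>+p. ennreal (norm (case p of (\<xi>, \<eta>) \<Rightarrow> F \<xi> \<eta>)) \<partial>(lborel \<Otimes>\<^sub>M lborel))
          = (\<integral>\<^sup>+\<xi>. (\<integral>\<^sup>+\<eta>. ennreal (norm (F \<xi> \<eta>)) \<partial>lborel) \<partial>(lborel::(real^'n) measure))"
      proof -
        have m: "(\<lambda>p. ennreal (norm (case p of (\<xi>, \<eta>) \<Rightarrow> F \<xi> \<eta>))) \<in> borel_measurable (lborel \<Otimes>\<^sub>M lborel)"
          using Fm by measurable
        show ?thesis using lborel.nn_integral_fst[OF m, symmetric] by simp
      qed
      also have "\<dots> = (\<integral>\<^sup>+\<eta>. (\<integral>\<^sup>+\<xi>. ennreal (norm (F \<xi> \<eta>)) \<partial>lborel) \<partial>(lborel::(real^'n) measure))"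
        by (rule lborel_pair.Fubini'[symmetric]) measurable
      also have "\<dots> = (\<integral>\<^sup>+\<eta>. ennreal (cmod (g1 \<eta>)) * (\<integral>\<^sup>+t. ennreal (cmod (g2 t)) \<partial>lborel) \<partial>(lborel::(real^'n) measure))"
      proof (rule nn_integral_cong)
        fix \<eta> :: "real^'n"
        have "(\<integral>\<^sup>+\<xi>. ennreal (norm (F \<xi> \<eta>)) \<partial>lborel) = (\<integral>\<^sup>+\<xi>. ennreal (cmod (g1 \<eta>)) * ennreal (cmod (g2 (\<xi> - \<eta>))) \<partial>(lborel::(real^'n) measure))"
          by (simp add: F_def norm_mult nc ennreal_mult)
        also have "\<dots> = ennreal (cmod (g1 \<eta>)) * (\<integral>\<^sup>+\<xi>. ennreal (cmod (g2 (\<xi> - \<eta>))) \<partial>(lborel::(real^'n) measure))"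
          by (rule nn_integral_cmult) measurable
        also have "(\<integral>\<^sup>+\<xi>. ennreal (cmod (g2 (\<xi> - \<eta>))) \<partial>(lborel::(real^'n) measure)) = (\<integral>\<^sup>+t. ennreal (cmod (g2 t)) \<partial>lborel)"
          by (rule nn_shift[of "\<lambda>t. ennreal (cmod (g2 t))"]) measurable
        finally show "(\<integral>\<^sup>+\<xi>. ennreal (norm (F \<xi> \<eta>)) \<partial>lborel) = ennreal (cmod (g1 \<eta>)) * (\<integral>\<^sup>+t. ennreal (cmod (g2 t)) \<partial>lborel)" .
      qed
      also have "\<dots> = (\<integral>\<^sup>+\<eta>. ennreal (cmod (g1 \<eta>)) \<partial>lborel) * (\<integral>\<^sup>+t. ennreal (cmod (g2 t)) \<partial>(lborel::(real^'n) measure))"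
        by (rule nn_integral_multc) measurable
      also have "\<dots> < \<infinity>" using L1 by (simp add: ennreal_mult_less_top)
      finally show "(\<integral>\<^sup>+p. ennreal (norm (case p of (\<xi>, \<eta>) \<Rightarrow> F \<xi> \<eta>)) \<partial>(lborel \<Otimes>\<^sub>M lborel)) < \<infinity>" .
    qed
  qed
  also have "\<dots> = (LINT \<xi>|lborel. (LINT \<eta>|lborel. g1 \<eta> * g2 (\<xi> - \<eta>)) * c \<xi>)"
    by (simp add: F_def)
  also have "\<dots> = inv_fourier (\<lambda>\<xi>. LINT \<eta>|lborel. g1 \<eta> * g2 (\<xi> - \<eta>)) x"
    by (simp add: inv_fourier_def c_def)
  finally show ?thesis .
qed



definition qp :: "real \<Rightarrow> real \<Rightarrow> real" where
  "qp p t = (if t \<in> {0..1} then t powr (-p) else 0) + (if t \<in> {1..} then t powr (-2) else 0)"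

definition k1 :: "real \<Rightarrow> real \<Rightarrow> ennreal" where
  "k1 p t = (if t = 0 then \<infinity> else ennreal (if \<bar>t\<bar> \<le> 1 then \<bar>t\<bar> powr (-p) else \<bar>t\<bar> powr (-2)))"

lemma qp_nonneg: "0 \<le> qp p t"
  by (simp add: qp_def)

lemma qp_finite:
  assumes "0 \<le> p" "p < 1"
  shows "(\<integral>\<^sup>+t. ennreal (qp p t) \<partial>lborel) < \<infinity>"
proof -
  have i1: "((\<lambda>t. t powr (-p)) has_integral (1 powr (-p+1) / (-p+1))) {0..1}"
    using assms by (intro has_integral_powr_from_0) auto
  have i2: "((\<lambda>t::real. t powr (-2::real)) has_integral -(1 powr (-2+1)) / (-2+1::real)) {1..}"
    by (intro has_integral_powr_to_inf) auto
  have "(qp p has_integral (1 powr (-p+1) / (-p+1) + -(1 powr (-2+1)) / (-2+1))) UNIV"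
    unfolding qp_def[abs_def]
    by (intro has_integral_add has_integral_restrict_UNIV[THEN iffD2] i1 i2)
  then have "(\<integral>\<^sup>+t. ennreal (qp p t) \<partial>lborel) = ennreal (1 powr (-p+1) / (-p+1) + -(1 powr (-2+1)) / (-2+1))"
    by (intro nn_integral_has_integral_lborel) (auto simp: qp_def[abs_def])
  then show ?thesis by simp
qed

lemma k1_meas[measurable]: "k1 p \<in> borel_measurable borel"
  unfolding k1_def[abs_def] by measurable

lemma k1_finite:
  assumes "0 \<le> p" "p < 1"
  shows "(\<integral>\<^sup>+t. k1 p t \<partial>lborel) < \<infinity>"
proof -
  have [measurable]: "qp p \<in> borel_measurable borel" unfolding qp_def[abs_def] by measurable
  have "(\<integral>\<^sup>+t. k1 p t \<partial>lborel) \<le> (\<integral>\<^sup>+t. ennreal (qp p t) + ennreal (qp p (- t)) \<partial>lborel)"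
  proof (rule nn_integral_mono_AE)
    show "AE t in lborel. k1 p t \<le> ennreal (qp p t) + ennreal (qp p (- t))"
      using AE_lborel_singleton[of 0]
    proof eventually_elim
      case (elim t)
      have "(if \<bar>t\<bar> \<le> 1 then \<bar>t\<bar> powr (-p) else \<bar>t\<bar> powr (-2)) \<le> qp p t + qp p (- t)"
        using elim by (cases "t > 0") (auto simp: qp_def)
      then have "k1 p t \<le> ennreal (qp p t + qp p (- t))"
        using elim by (simp add: k1_def ennreal_leI)
      then show ?case by (simp add: qp_nonneg)
    qed
  qed
  also have "\<dots> = (\<integral>\<^sup>+t. ennreal (qp p t) \<partial>lborel) + (\<integral>\<^sup>+t. ennreal (qp p (- t)) \<partial>lborel)"
    by (simp add: nn_integral_add)
  also have "(\<integral>\<^sup>+t. ennreal (qp p (- t)) \<partial>lborel) = (\<integral>\<^sup>+t. ennreal (qp p t) \<partial>lborel)"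
  proof -
    have "(\<integral>\<^sup>+t. ennreal (qp p t) \<partial>lborel) = (\<integral>\<^sup>+t. ennreal (qp p t) \<partial>distr lborel borel uminus)"
      using lborel_distr_uminus[symmetric] by (rule arg_cong[where f="\<lambda>M. integral\<^sup>N M _"])
    also have "\<dots> = (\<integral>\<^sup>+t. ennreal (qp p (- t)) \<partial>lborel)"
      by (simp add: nn_integral_distr)
    finally show ?thesis ..
  qed
  finally have le: "(\<integral>\<^sup>+t. k1 p t \<partial>lborel) \<le> (\<integral>\<^sup>+t. ennreal (qp p t) \<partial>lborel) + (\<integral>\<^sup>+t. ennreal (qp p t) \<partial>lborel)" .
  have "(\<integral>\<^sup>+t. ennreal (qp p t) \<partial>lborel) + (\<integral>\<^sup>+t. ennreal (qp p t) \<partial>lborel) < \<infinity>"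
    using qp_finite[OF assms] by (simp add: less_top[symmetric] ennreal_add_eq_top)
  with le show ?thesis by (rule le_less_trans)
qed

lemma prod_k1_finite:
  assumes "0 \<le> p" "p < 1"
  shows "(\<integral>\<^sup>+x. (\<Prod>b\<in>Basis. k1 p (x \<bullet> b)) \<partial>(lborel::'a::euclidean_space measure)) < \<infinity>"
proof -
  have "(\<integral>\<^sup>+x. (\<Prod>b\<in>Basis. k1 p (x \<bullet> b)) \<partial>(lborel::'a measure)) = (\<Prod>b\<in>(Basis::'a set). (\<integral>\<^sup>+t. k1 p t \<partial>lborel))"
    by (rule nn_integral_lborel_prod) auto
  also have "\<dots> = (\<integral>\<^sup>+t. k1 p t \<partial>lborel) ^ DIM('a)" by simp
  also have "\<dots> < \<infinity>" using k1_finite[OF assms] by (simp add: power_less_top_ennreal less_top)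
  finally show ?thesis .
qed

lemma exp_ge_pow:
  fixes y :: real assumes "0 \<le> y" "m > 0"
  shows "(y / m) ^ m \<le> exp y"
proof -
  have "y / m \<le> exp (y / m)" using exp_ge_add_one_self[of "y/m"] by linarith
  then have "(y / m) ^ m \<le> exp (y / m) ^ m" using assms by (intro power_mono) auto
  also have "exp (y / m) ^ m = exp (real m * (y / m))" by (rule exp_of_nat_mult[symmetric])
  also have "real m * (y / m) = y" using assms by simp
  finally show ?thesis .
qed

lemma exp_decay_poly:
  fixes \<beta> \<nu> :: real and D :: nat
  assumes "0 < \<beta>" "0 < \<nu>"
  shows "\<exists>B\<ge>0. \<forall>r>1. exp (- \<beta> * r powr \<nu>) \<le> B * r powr (- 2 * D)"
proof -
  define m :: nat where "m = nat \<lceil>2 * D / \<nu>\<rceil> + 1"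
  have m0: "m > 0" by (simp add: m_def)
  have "2 * D / \<nu> \<le> real m"
  proof -
    have "2 * D / \<nu> \<le> real_of_int \<lceil>2 * D / \<nu>\<rceil>" by (rule le_of_int_ceiling)
    also have "\<dots> \<le> real m" unfolding m_def by linarith
    finally show ?thesis .
  qed
  then have mge: "2 * D \<le> \<nu> * m" using assms by (simp add: pos_divide_le_eq mult.commute)
  define B where "B = (m / \<beta>) ^ m"
  have B0: "B \<ge> 0" using assms by (simp add: B_def)
  have "exp (- \<beta> * r powr \<nu>) \<le> B * r powr (- 2 * D)" if r: "r > 1" for r
  proof -
    have y0: "0 \<le> \<beta> * r powr \<nu>" using assms by simp
    have e1: "(\<beta> * r powr \<nu> / m) ^ m \<le> exp (\<beta> * r powr \<nu>)" using exp_ge_pow[OF y0 m0] .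
    have e2: "(\<beta> * r powr \<nu> / m) ^ m = (\<beta> / m) ^ m * r powr (\<nu> * m)"
    proof -
      have "(r powr \<nu>)^m = r powr (real m * \<nu>)" using r by (intro powr_power) auto
      moreover have "\<beta> * r powr \<nu> / m = (\<beta> / m) * r powr \<nu>" by simp
      ultimately show ?thesis by (simp only: power_mult_distrib mult.commute)
    qed
    have e3: "r powr (2 * D) \<le> r powr (\<nu> * m)" using r mge by (intro powr_mono) auto
    have c0: "0 \<le> (\<beta> / m) ^ m" using assms by simp
    have le: "(\<beta> / m) ^ m * r powr (2 * D) \<le> exp (\<beta> * r powr \<nu>)"
      using mult_left_mono[OF e3 c0] e1 e2 by linarith
    have pos: "(\<beta> / m) ^ m > 0" "r powr (2 * D) > 0" using assms m0 r by auto
    have "exp (- \<beta> * r powr \<nu>) = inverse (exp (\<beta> * r powr \<nu>))" by (simp add: exp_minus)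
    also have "\<dots> \<le> inverse ((\<beta> / m) ^ m * r powr (2 * D))"
      using le pos by (intro le_imp_inverse_le) auto
    also have "\<dots> = inverse ((\<beta> / m) ^ m) * inverse (r powr (2 * D))" by (rule inverse_mult_distrib)
    also have "inverse ((\<beta> / m) ^ m) = B" unfolding B_def by (simp add: power_inverse[symmetric])
    also have "inverse (r powr (2 * D)) = r powr (- 2 * D)" using r by (simp add: powr_minus)
    finally show ?thesis .
  qed
  then show ?thesis using B0 by blast
qed



definition Ifun :: "bool \<Rightarrow> real \<Rightarrow> real \<Rightarrow> real \<Rightarrow> real \<Rightarrow> real \<Rightarrow> real" where
  "Ifun s \<rho> \<nu> kg kl r = inverse ((FB s \<rho> \<nu> kg kl r)\<^sup>2) *
      (1 + 2 powr (2 * max kl kg) * exp (\<rho> * rpow r \<nu>) powr (2 * \<nu>))"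

lemma exp_powr_real: "exp (a::real) powr b = exp (b * a)"
  by (simp add: powr_def)

lemma Ifun_le_small:
  assumes "0 < \<nu>" "\<nu> < 1" "0 < \<rho>" "0 \<le> kg" "0 \<le> kl" "0 < r" "r \<le> 1"
  shows "Ifun s \<rho> \<nu> kg kl r \<le> (1 + 2 powr (2 * max kl kg) * exp (2 * \<nu> * \<rho>)) * r powr (- (2 * kl))"
proof -
  have F1: "F1r kg kl r = r powr kl" using assms by (simp add: F1r_def rpow_pos)
  have e1: "1 \<le> exp (\<rho> * PP s \<nu> r)" using assms PP_nonneg[of s \<nu> r] by simp
  have FBge: "r powr kl \<le> FB s \<rho> \<nu> kg kl r"
    unfolding FB_def F1 using e1 by (simp add: mult_le_cancel_right1)
  have rp: "0 < r powr kl" using assms by simp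
  have inv: "inverse ((FB s \<rho> \<nu> kg kl r)\<^sup>2) \<le> r powr (- (2 * kl))"
  proof -
    have "(r powr kl)\<^sup>2 \<le> (FB s \<rho> \<nu> kg kl r)\<^sup>2" using FBge rp by (intro power_mono) auto
    then have "inverse ((FB s \<rho> \<nu> kg kl r)\<^sup>2) \<le> inverse ((r powr kl)\<^sup>2)"
      using rp by (intro le_imp_inverse_le) auto
    also have "(r powr kl)\<^sup>2 = r powr (2 * kl)"
      unfolding power2_eq_square mult_2 by (rule powr_add[symmetric])
    also have "inverse (r powr (2 * kl)) = r powr (- (2 * kl))" by (rule powr_minus[symmetric])
    finally show ?thesis .
  qed
  have rnu: "rpow r \<nu> \<le> 1" using assms by (intro rpow_le1) auto
  have br: "1 + 2 powr (2 * max kl kg) * exp (\<rho> * rpow r \<nu>) powr (2 * \<nu>) \<le> 1 + 2 powr (2 * max kl kg) * exp (2 * \<nu> * \<rho>)"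
  proof -
    have "exp (\<rho> * rpow r \<nu>) powr (2 * \<nu>) = exp (2 * \<nu> * (\<rho> * rpow r \<nu>))" by (simp add: exp_powr_real)
    also have "\<dots> \<le> exp (2 * \<nu> * \<rho>)" using assms rnu by (simp add: mult_left_le)
    finally show ?thesis by (simp add: mult_left_mono)
  qed
  have "Ifun s \<rho> \<nu> kg kl r \<le> r powr (- (2 * kl)) * (1 + 2 powr (2 * max kl kg) * exp (2 * \<nu> * \<rho>))"
    unfolding Ifun_def using inv br by (intro mult_mono) auto
  then show ?thesis by (simp add: mult.commute)
qed

lemma Ifun_le_large:
  assumes "0 < \<nu>" "\<nu> < 1" "0 < \<rho>" "0 \<le> kg" "0 \<le> kl" "1 < r"
  shows "Ifun s \<rho> \<nu> kg kl r \<le> (1 + 2 powr (2 * max kl kg)) * exp (- (2 * \<rho> * (1 - \<nu>)) * r powr \<nu>)"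
proof -
  have F1: "1 \<le> F1r kg kl r" using assms by (simp add: F1r_def rpow_ge1)
  have PP: "r powr \<nu> \<le> PP s \<nu> r" using assms by (auto simp: PP_def rpow_nu)
  have e: "exp (\<rho> * r powr \<nu>) \<le> exp (\<rho> * PP s \<nu> r)" using PP assms by simp
  have FBge: "exp (\<rho> * r powr \<nu>) \<le> FB s \<rho> \<nu> kg kl r"
    unfolding FB_def using e F1 by (smt (verit) exp_gt_zero mult_le_cancel_left1)
  have inv: "inverse ((FB s \<rho> \<nu> kg kl r)\<^sup>2) \<le> exp (- 2 * \<rho> * r powr \<nu>)"
  proof -
    have "(exp (\<rho> * r powr \<nu>))\<^sup>2 \<le> (FB s \<rho> \<nu> kg kl r)\<^sup>2" using FBge by (intro power_mono) auto
    then have "inverse ((FB s \<rho> \<nu> kg kl r)\<^sup>2) \<le> inverse ((exp (\<rho> * r powr \<nu>))\<^sup>2)"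
      by (intro le_imp_inverse_le) auto
    also have "inverse ((exp (\<rho> * r powr \<nu>))\<^sup>2) = exp (- 2 * \<rho> * r powr \<nu>)"
      by (simp add: power2_eq_square mult_exp_exp exp_minus[symmetric])
    finally show ?thesis .
  qed
  have br: "1 + 2 powr (2 * max kl kg) * exp (\<rho> * rpow r \<nu>) powr (2 * \<nu>) \<le> (1 + 2 powr (2 * max kl kg)) * exp (2 * \<nu> * \<rho> * r powr \<nu>)"
  proof -
    have "exp (\<rho> * rpow r \<nu>) powr (2 * \<nu>) = exp (2 * \<nu> * \<rho> * r powr \<nu>)"
      using assms by (simp add: exp_powr_real rpow_nu mult.assoc)
    moreover have "1 \<le> exp (2 * \<nu> * \<rho> * r powr \<nu>)" using assms by simp
    ultimately show ?thesis by (simp add: algebra_simps)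
  qed
  have "Ifun s \<rho> \<nu> kg kl r \<le> exp (- 2 * \<rho> * r powr \<nu>) * ((1 + 2 powr (2 * max kl kg)) * exp (2 * \<nu> * \<rho> * r powr \<nu>))"
    unfolding Ifun_def using inv br by (intro mult_mono) auto
  also have "\<dots> = (1 + 2 powr (2 * max kl kg)) * (exp (- 2 * \<rho> * r powr \<nu>) * exp (2 * \<nu> * \<rho> * r powr \<nu>))"
    by (simp add: algebra_simps)
  also have "exp (- 2 * \<rho> * r powr \<nu>) * exp (2 * \<nu> * \<rho> * r powr \<nu>) = exp (- (2 * \<rho> * (1 - \<nu>)) * r powr \<nu>)"
    by (simp add: mult_exp_exp algebra_simps)
  finally show ?thesis .
qed



lemma Ifun_meas[measurable]: "(\<lambda>x::'a::euclidean_space. Ifun s \<rho> \<nu> kg kl (norm x)) \<in> borel_measurable borel"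
  unfolding Ifun_def FB_def PP_def F1r_def rpow_def by measurable

lemma Ifun_nonneg: "0 \<le> Ifun s \<rho> \<nu> kg kl r"
  by (simp add: Ifun_def)

lemma Ifun_prod_bound:
  assumes "0 < \<nu>" "\<nu> < 1" "0 < \<rho>" "0 \<le> kg" "0 \<le> kl"
  defines "p \<equiv> 2 * kl / DIM('a::euclidean_space)"
  shows "\<exists>A>0. \<forall>x::'a. ennreal (Ifun s \<rho> \<nu> kg kl (norm x)) \<le> ennreal A * (\<Prod>b\<in>Basis. k1 p (x \<bullet> b))"
proof -
  define D where "D = DIM('a)"
  have D0: "D > 0" by (simp add: D_def)
  have p0: "0 \<le> p" using assms by (simp add: p_def)
  have Dp: "real D * p = 2 * kl" using D0 by (simp add: p_def D_def)
  obtain B where B0: "B \<ge> 0" and B: "\<And>r. r > 1 \<Longrightarrow> exp (- (2 * \<rho> * (1 - \<nu>)) * r powr \<nu>) \<le> B * r powr (- 2 * D)"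
    using exp_decay_poly[of "2 * \<rho> * (1 - \<nu>)" \<nu> D] assms by auto
  define A1 where "A1 = 1 + 2 powr (2 * max kl kg) * exp (2 * \<nu> * \<rho>)"
  define A2 where "A2 = (1 + 2 powr (2 * max kl kg)) * B"
  define A where "A = max A1 A2"
  have A1pos: "A1 > 0" by (simp add: A1_def add_pos_nonneg)
  have A: "A > 0" "A1 \<le> A" "A2 \<le> A" using A1pos by (auto simp: A_def)
  have "ennreal (Ifun s \<rho> \<nu> kg kl (norm x)) \<le> ennreal A * (\<Prod>b\<in>Basis. k1 p (x \<bullet> b))" for x :: 'a
  proof (cases "\<exists>b\<in>Basis. x \<bullet> b = 0")
    case True
    have "(\<Prod>b\<in>Basis. k1 p (x \<bullet> b)) = top"
      unfolding ennreal_prod_eq_top using True by (auto simp: k1_def)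
    then show ?thesis using A by (simp add: ennreal_mult_top)
  next
    case False
    define q where "q = (\<lambda>t::real. if \<bar>t\<bar> \<le> 1 then \<bar>t\<bar> powr (-p) else \<bar>t\<bar> powr (-2))"
    have qnn: "0 \<le> q t" for t by (simp add: q_def)
    have prodeq: "(\<Prod>b\<in>Basis. k1 p (x \<bullet> b)) = ennreal (\<Prod>b\<in>Basis. q (x \<bullet> b))"
      using False by (simp add: k1_def q_def prod_ennreal[symmetric] qnn)
    have x0: "x \<noteq> 0" using False by (metis SOME_Basis inner_zero_left)
    define r where "r = norm x"
    have r0: "r > 0" using x0 by (simp add: r_def)
    have cb: "0 < \<bar>x \<bullet> b\<bar>" "\<bar>x \<bullet> b\<bar> \<le> r" if "b \<in> Basis" for b
      using False that Basis_le_norm[OF that, of x] by (auto simp: r_def)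
    have key: "Ifun s \<rho> \<nu> kg kl r \<le> A * (\<Prod>b\<in>Basis. q (x \<bullet> b))"
    proof (cases "r \<le> 1")
      case True
      have "(r powr (-p)) ^ D \<le> (\<Prod>b\<in>Basis. q (x \<bullet> b))"
      proof -
        have "(\<Prod>b\<in>(Basis::'a set). r powr (-p)) \<le> (\<Prod>b\<in>Basis. q (x \<bullet> b))"
        proof (rule prod_mono)
          fix b :: 'a assume b: "b \<in> Basis"
          have "r powr (-p) \<le> \<bar>x \<bullet> b\<bar> powr (-p)" using cb[OF b] p0 by (intro powr_mono2') auto
          then show "0 \<le> r powr (-p) \<and> r powr (-p) \<le> q (x \<bullet> b)"
            using cb[OF b] True by (simp add: q_def)
        qed
        then show ?thesis by (simp add: D_def)
      qed
      moreover have "(r powr (-p)) ^ D = r powr (- (2 * kl))"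
        using r0 Dp by (simp add: powr_power)
      ultimately have pr: "r powr (- (2 * kl)) \<le> (\<Prod>b\<in>Basis. q (x \<bullet> b))" by simp
      have "Ifun s \<rho> \<nu> kg kl r \<le> A1 * r powr (- (2 * kl))"
        unfolding A1_def using Ifun_le_small[OF assms(1-5) r0 True] .
      also have "\<dots> \<le> A * (\<Prod>b\<in>Basis. q (x \<bullet> b))"
        using A pr A1pos by (intro mult_mono) auto
      finally show ?thesis .
    next
      case False
      then have r1: "r > 1" by simp
      have "(r powr (-2)) ^ D \<le> (\<Prod>b\<in>Basis. q (x \<bullet> b))"
      proof -
        have "(\<Prod>b\<in>(Basis::'a set). r powr (-2)) \<le> (\<Prod>b\<in>Basis. q (x \<bullet> b))"
        proof (rule prod_mono)
          fix b :: 'a assume b: "b \<in> Basis"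
          have "r powr (-2) \<le> q (x \<bullet> b)"
          proof (cases "\<bar>x \<bullet> b\<bar> \<le> 1")
            case True
            have "r powr (-2) \<le> 1 powr (-2)" using r1 by (intro powr_mono2') auto
            also have "1 powr (-2::real) \<le> \<bar>x \<bullet> b\<bar> powr (-p)"
              using cb[OF b] True p0 powr_mono2'[of "-p" "\<bar>x \<bullet> b\<bar>" 1] by simp
            finally show ?thesis using True by (simp add: q_def)
          next
            case False
            have "r powr (-2) \<le> \<bar>x \<bullet> b\<bar> powr (-2)" using cb[OF b] by (intro powr_mono2') auto
            then show ?thesis using False by (simp add: q_def)
          qed
          then show "0 \<le> r powr (-2) \<and> r powr (-2) \<le> q (x \<bullet> b)" by simp
        qed
        then show ?thesis by (simp add: D_def)
      qed
      moreover have "(r powr (-2)) ^ D = r powr (- 2 * D)"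
        using r0 by (simp add: powr_power mult.commute)
      ultimately have pr: "r powr (- 2 * D) \<le> (\<Prod>b\<in>Basis. q (x \<bullet> b))" by simp
      have "Ifun s \<rho> \<nu> kg kl r \<le> (1 + 2 powr (2 * max kl kg)) * exp (- (2 * \<rho> * (1 - \<nu>)) * r powr \<nu>)"
        using Ifun_le_large[OF assms(1-5) r1] .
      also have "\<dots> \<le> (1 + 2 powr (2 * max kl kg)) * (B * r powr (- 2 * D))"
        using B[OF r1] by (intro mult_left_mono) (auto intro: add_nonneg_nonneg)
      also have "\<dots> = A2 * r powr (- 2 * D)" by (simp add: A2_def)
      also have "\<dots> \<le> A * (\<Prod>b\<in>Basis. q (x \<bullet> b))"
        using A pr B0 by (intro mult_mono) (auto simp: A2_def intro: add_nonneg_nonneg)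
      finally show ?thesis .
    qed
    have "ennreal (Ifun s \<rho> \<nu> kg kl r) \<le> ennreal (A * (\<Prod>b\<in>Basis. q (x \<bullet> b)))"
      using key by (rule ennreal_leI)
    also have "\<dots> = ennreal A * ennreal (\<Prod>b\<in>Basis. q (x \<bullet> b))"
      using A by (simp add: ennreal_mult prod_nonneg qnn)
    finally show ?thesis unfolding prodeq r_def .
  qed
  then show ?thesis using A by blast
qed

lemma Ifun_finite:
  assumes "0 < \<nu>" "\<nu> < 1" "0 < \<rho>" "0 \<le> kg" "0 \<le> kl" "kl < DIM('a::euclidean_space) / 2"
  shows "(\<integral>\<^sup>+x. ennreal (Ifun s \<rho> \<nu> kg kl (norm x)) \<partial>(lborel::'a measure)) < \<infinity>"
proof -
  define p where "p = 2 * kl / DIM('a)"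
  have p: "0 \<le> p" "p < 1" using assms by (auto simp: p_def field_simps)
  obtain A where A: "A > 0" and bd: "\<And>x::'a. ennreal (Ifun s \<rho> \<nu> kg kl (norm x)) \<le> ennreal A * (\<Prod>b\<in>Basis. k1 p (x \<bullet> b))"
    using Ifun_prod_bound[OF assms(1-5), of s] unfolding p_def by blast
  have "(\<integral>\<^sup>+x. ennreal (Ifun s \<rho> \<nu> kg kl (norm x)) \<partial>(lborel::'a measure)) \<le> (\<integral>\<^sup>+x. ennreal A * (\<Prod>b\<in>Basis. k1 p (x \<bullet> b)) \<partial>(lborel::'a measure))"
    by (rule nn_integral_mono) (rule bd)
  also have "\<dots> = ennreal A * (\<integral>\<^sup>+x. (\<Prod>b\<in>Basis. k1 p (x \<bullet> b)) \<partial>(lborel::'a measure))"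
    by (rule nn_integral_cmult) measurable
  also have "\<dots> < \<infinity>" using prod_k1_finite[OF p, where 'a='a] by (simp add: ennreal_mult_less_top)
  finally show ?thesis .
qed



lemma FB_good:
  assumes "0 < \<nu>" "\<nu> < 1" "0 < \<rho>" "0 \<le> kg" "0 \<le> kl"
  shows "goodPhi (FB s \<rho> \<nu> kg kl) (2 powr (max kl kg)) (\<rho> * \<nu>) \<nu>"
  unfolding goodPhi_def
proof (intro conjI allI impI)
  show "FB s \<rho> \<nu> kg kl \<in> borel_measurable borel"
    unfolding FB_def[abs_def] PP_def F1r_def rpow_def by measurable
  show "0 \<le> FB s \<rho> \<nu> kg kl r" for r by (rule FB_nonneg)
  show "0 < FB s \<rho> \<nu> kg kl r" if "0 < r" for r using that by (rule FB_pos)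
  show "FB s \<rho> \<nu> kg kl c \<le> FB s \<rho> \<nu> kg kl a" if "0 \<le> c" "c \<le> a" for c a
    using assms that by (intro FB_mono) auto
  show "FB s \<rho> \<nu> kg kl c \<le> 2 powr max kl kg * exp (\<rho> * \<nu> * b powr \<nu>) * FB s \<rho> \<nu> kg kl a"
    if "0 \<le> b" "b \<le> a" "0 \<le> c" "c \<le> a + b" for a b c
    using FB_step[OF assms that] .
qed

lemma Ifun_split:
  assumes "0 < \<nu>" "0 \<le> r"
  shows "Ifun s \<rho> \<nu> kg kl r = inverse ((FB s \<rho> \<nu> kg kl r)\<^sup>2)
     + inverse ((FB s \<rho> \<nu> kg kl r)\<^sup>2) * (2 powr (max kl kg))\<^sup>2 * exp (2 * (\<rho> * \<nu>) * r powr \<nu>)"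
proof -
  have a: "(2 powr (max kl kg))\<^sup>2 = (2::real) powr (2 * max kl kg)"
    unfolding power2_eq_square mult_2 by (rule powr_add[symmetric])
  have e0: "2 * \<nu> * (\<rho> * r powr \<nu>) = 2 * (\<rho> * \<nu>) * r powr \<nu>" by (simp only: ac_simps)
  have e: "exp (\<rho> * rpow r \<nu>) powr (2 * \<nu>) = exp (2 * (\<rho> * \<nu>) * r powr \<nu>)"
  proof -
    have rn: "rpow r \<nu> = r powr \<nu>" using assms by (simp add: rpow_nu)
    show ?thesis unfolding exp_powr_real rn e0 ..
  qed
  have "Ifun s \<rho> \<nu> kg kl r = inverse ((FB s \<rho> \<nu> kg kl r)\<^sup>2) * (1 + (2 powr (max kl kg))\<^sup>2 * exp (2 * (\<rho> * \<nu>) * r powr \<nu>))"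
    unfolding Ifun_def a e ..
  also have "\<dots> = inverse ((FB s \<rho> \<nu> kg kl r)\<^sup>2) + inverse ((FB s \<rho> \<nu> kg kl r)\<^sup>2) * (2 powr (max kl kg))\<^sup>2 * exp (2 * (\<rho> * \<nu>) * r powr \<nu>)"
    by (simp only: distrib_left mult_1_right mult.assoc)
  finally show ?thesis .
qed

lemma fb_cases:
  assumes "fb = (\<lambda>\<xi>. ff \<rho> \<nu> \<xi> * f1 kg kl \<xi>) \<or> fb = (\<lambda>\<xi>. f0 \<rho> \<nu> \<xi> * f1 kg kl \<xi>)"
  shows "\<exists>s. fb = (\<lambda>\<xi>. FB s \<rho> \<nu> kg kl (norm \<xi>))"
proof -
  have "(\<lambda>\<xi>. ff \<rho> \<nu> \<xi> * f1 kg kl \<xi>) = (\<lambda>\<xi>. FB True \<rho> \<nu> kg kl (norm \<xi>))"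
    by (simp add: fun_eq_iff ff_def f1_def FB_def PP_def F1r_def)
  moreover have "(\<lambda>\<xi>. f0 \<rho> \<nu> \<xi> * f1 kg kl \<xi>) = (\<lambda>\<xi>. FB False \<rho> \<nu> kg kl (norm \<xi>))"
    by (simp add: fun_eq_iff f0_def f1_def FB_def PP_def F1r_def)
  ultimately show ?thesis using assms by blast
qed

theorem lemmaB1:
  fixes \<rho> \<nu> kg kl :: real and fb :: "real^'n \<Rightarrow> real"
  assumes "0 < \<nu>" "\<nu> < 1" "0 < \<rho>" "0 \<le> kg" "0 \<le> kl" "kl < real CARD('n) / 2"
    and "fb = (\<lambda>\<xi>. ff \<rho> \<nu> \<xi> * f1 kg kl \<xi>) \<or> fb = (\<lambda>\<xi>. f0 \<rho> \<nu> \<xi> * f1 kg kl \<xi>)"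
  defines "C \<equiv> sqrt (LINT \<eta>|lborel. inverse ((fb \<eta>)\<^sup>2) *
                 (1 + 2 powr (2 * max kl kg) * (f0 \<rho> \<nu> \<eta>) powr (2 * \<nu>)))"
  shows "integrable lborel (\<lambda>\<eta>. inverse ((fb \<eta>)\<^sup>2) *
                 (1 + 2 powr (2 * max kl kg) * (f0 \<rho> \<nu> \<eta>) powr (2 * \<nu>)))
    \<and> (\<forall>u1 u2 g1 g2. in_K_with fb u1 g1 \<longrightarrow> in_K_with fb u2 g2 \<longrightarrow>
         (\<exists>g. in_K_with fb (\<lambda>x. u1 x * u2 x) g \<and>
              wnorm fb g \<le> C * wnorm fb g1 * wnorm fb g2))"
proof -
  obtain s where fbeq: "fb = (\<lambda>\<xi>. FB s \<rho> \<nu> kg kl (norm \<xi>))" using fb_cases[OF assms(7)] by blast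
  define \<Phi> where "\<Phi> = FB s \<rho> \<nu> kg kl"
  define K where "K = (2::real) powr (max kl kg)"
  define \<theta> where "\<theta> = \<rho> * \<nu>"
  have G: "goodPhi \<Phi> K \<theta> \<nu>" unfolding \<Phi>_def K_def \<theta>_def using FB_good assms by blast
  have K0: "0 \<le> K" by (simp add: K_def)
  note [measurable] = Phi_facts(1)[OF G]
  have Phinn: "\<And>r. 0 \<le> \<Phi> r" using Phi_facts[OF G] by auto
  define Ist where "Ist = (\<lambda>\<eta>::real^'n. inverse ((fb \<eta>)\<^sup>2) * (1 + 2 powr (2 * max kl kg) * (f0 \<rho> \<nu> \<eta>) powr (2 * \<nu>)))"
  have Ist_eq: "Ist = (\<lambda>\<eta>. Ifun s \<rho> \<nu> kg kl (norm \<eta>))"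
    by (simp add: Ist_def fbeq fun_eq_iff Ifun_def f0_def)
  have [measurable]: "Ist \<in> borel_measurable borel" unfolding Ist_eq by measurable
  have Istnn: "0 \<le> Ist x" for x unfolding Ist_eq by (rule Ifun_nonneg)
  have Ifin: "(\<integral>\<^sup>+x. ennreal (Ist x) \<partial>(lborel::(real^'n) measure)) < \<infinity>"
    unfolding Ist_eq using assms by (intro Ifun_finite) auto
  have Cdef: "C = sqrt (LINT x|lborel. Ist x)" unfolding C_def Ist_def ..
  have Iint: "integrable lborel Ist"
    using Ifin Istnn by (intro integrableI_nonneg) auto
  define h0 where "h0 = (\<lambda>x::real^'n. inverse ((\<Phi> (norm x))\<^sup>2))"
  define X where "X = (\<lambda>x::real^'n. inverse ((\<Phi> (norm x))\<^sup>2) * K\<^sup>2 * exp (2 * \<theta> * norm x powr \<nu>))"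
  have [measurable]: "h0 \<in> borel_measurable borel" "X \<in> borel_measurable borel"
    unfolding h0_def X_def by measurable
  have IhX: "Ist x = h0 x + X x" for x
    unfolding Ist_eq h0_def X_def \<Phi>_def K_def \<theta>_def using assms by (intro Ifun_split) auto
  have C2e_eq: "(\<integral>\<^sup>+x. ennreal (h0 x) \<partial>(lborel::(real^'n) measure)) + (\<integral>\<^sup>+x. ennreal (X x) \<partial>(lborel::(real^'n) measure))
      = (\<integral>\<^sup>+x. ennreal (Ist x) \<partial>(lborel::(real^'n) measure))"
  proof -
    have "(\<integral>\<^sup>+x. ennreal (Ist x) \<partial>(lborel::(real^'n) measure)) = (\<integral>\<^sup>+x. ennreal (h0 x) + ennreal (X x) \<partial>(lborel::(real^'n) measure))"
      using Phinn K0 by (intro nn_integral_cong) (simp add: IhX h0_def X_def ennreal_plus)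
    also have "\<dots> = (\<integral>\<^sup>+x. ennreal (h0 x) \<partial>(lborel::(real^'n) measure)) + (\<integral>\<^sup>+x. ennreal (X x) \<partial>(lborel::(real^'n) measure))"
      by (rule nn_integral_add) measurable
    finally show ?thesis ..
  qed
  have C2e_val: "(\<integral>\<^sup>+x. ennreal (Ist x) \<partial>(lborel::(real^'n) measure)) = ennreal (LINT x|lborel. Ist x)"
    using Iint Istnn by (intro nn_integral_eq_integral) auto
  have LIst_nn: "0 \<le> (LINT x|lborel. Ist x)" using Istnn by (intro integral_nonneg_AE) auto
  have h0fin: "(\<integral>\<^sup>+x. ennreal (h0 x) \<partial>(lborel::(real^'n) measure)) < \<infinity>"
    using Ifin unfolding C2e_eq[symmetric] by (simp add: ennreal_add_eq_top less_top[symmetric])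
  have main: "\<exists>g. in_K_with fb (\<lambda>x. u1 x * u2 x) g \<and> wnorm fb g \<le> C * wnorm fb g1 * wnorm fb g2"
    if K1: "in_K_with fb u1 g1" and K2: "in_K_with fb u2 g2" for u1 u2 g1 g2
  proof -
    have [measurable]: "g1 \<in> borel_measurable borel" "g2 \<in> borel_measurable borel"
      using K1 K2 by (auto simp: in_K_with_def)
    have i1: "integrable lborel (\<lambda>x. (\<Phi> (norm x) * cmod (g1 x))\<^sup>2)"
      and i2: "integrable lborel (\<lambda>x. (\<Phi> (norm x) * cmod (g2 x))\<^sup>2)"
      using K1 K2 by (auto simp: in_K_with_def fbeq \<Phi>_def)
    define L1 where "L1 = (LINT x|lborel. (\<Phi> (norm x) * cmod (g1 x))\<^sup>2)"
    define L2 where "L2 = (LINT x|lborel. (\<Phi> (norm x) * cmod (g2 x))\<^sup>2)"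
    have N1: "(\<integral>\<^sup>+x. ennreal ((\<Phi> (norm x) * cmod (g1 x))\<^sup>2) \<partial>(lborel::(real^'n) measure)) = ennreal L1"
      unfolding L1_def using i1 by (intro nn_integral_eq_integral) auto
    have N2: "(\<integral>\<^sup>+x. ennreal ((\<Phi> (norm x) * cmod (g2 x))\<^sup>2) \<partial>(lborel::(real^'n) measure)) = ennreal L2"
      unfolding L2_def using i2 by (intro nn_integral_eq_integral) auto
    have L1nn: "0 \<le> L1" and L2nn: "0 \<le> L2" unfolding L1_def L2_def by (auto intro: integral_nonneg_AE)
    have l1: "(\<integral>\<^sup>+x. ennreal (cmod (g1 x)) \<partial>(lborel::(real^'n) measure)) < \<infinity>"
      by (rule L1_bound[OF G]) (use h0fin N1 in \<open>auto simp: h0_def\<close>)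
    have l2: "(\<integral>\<^sup>+x. ennreal (cmod (g2 x)) \<partial>(lborel::(real^'n) measure)) < \<infinity>"
      by (rule L1_bound[OF G]) (use h0fin N2 in \<open>auto simp: h0_def\<close>)
    define g where "g = (\<lambda>\<xi>. LINT \<eta>|(lborel::(real^'n) measure). g1 \<eta> * g2 (\<xi> - \<eta>))"
    have [measurable]: "g \<in> borel_measurable borel" unfolding g_def by (rule conv_meas) measurable
    have bound: "(\<integral>\<^sup>+\<xi>. ennreal ((\<Phi> (norm \<xi>) * cmod (g \<xi>))\<^sup>2) \<partial>(lborel::(real^'n) measure))
        \<le> ennreal (LINT x|lborel. Ist x) * ennreal L1 * ennreal L2"
      using conv_L2[OF G K0, of g1 g2] unfolding g_def N1 N2
      using C2e_eq C2e_val unfolding h0_def X_def by simp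
    have fin: "ennreal (LINT x|lborel. Ist x) * ennreal L1 * ennreal L2 < \<infinity>"
      by (simp add: ennreal_mult_less_top)
    have ig: "integrable lborel (\<lambda>\<xi>. (fb \<xi> * cmod (g \<xi>))\<^sup>2)"
      unfolding fbeq \<Phi>_def[symmetric] using bound fin
      by (intro integrableI_nonneg) (auto intro: le_less_trans)
    have inK: "in_K_with fb (\<lambda>x. u1 x * u2 x) g"
      unfolding in_K_with_def
    proof (intro conjI allI)
      show "g \<in> borel_measurable lborel" by simp
      show "integrable lborel (\<lambda>\<xi>. (fb \<xi> * cmod (g \<xi>))\<^sup>2)" by (rule ig)
      fix x
      have "u1 x = inv_fourier g1 x" "u2 x = inv_fourier g2 x" using K1 K2 by (auto simp: in_K_with_def)
      then show "u1 x * u2 x = inv_fourier g x"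
        unfolding g_def using fourier_conv[of g1 g2 x] l1 l2 by simp
    qed
    have "(LINT \<xi>|lborel. (fb \<xi> * cmod (g \<xi>))\<^sup>2) = enn2real (\<integral>\<^sup>+\<xi>. ennreal ((\<Phi> (norm \<xi>) * cmod (g \<xi>))\<^sup>2) \<partial>(lborel::(real^'n) measure))"
      unfolding fbeq \<Phi>_def[symmetric] by (rule integral_eq_nn_integral) auto
    also have "\<dots> \<le> enn2real (ennreal (LINT x|lborel. Ist x) * ennreal L1 * ennreal L2)"
      by (rule enn2real_mono[OF bound]) (use fin in \<open>simp add: less_top\<close>)
    also have "\<dots> = (LINT x|lborel. Ist x) * L1 * L2"
      using LIst_nn L1nn L2nn by (simp add: ennreal_mult[symmetric] mult_nonneg_nonneg)
    finally have le: "(LINT \<xi>|lborel. (fb \<xi> * cmod (g \<xi>))\<^sup>2) \<le> (LINT x|lborel. Ist x) * L1 * L2" .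
    have "wnorm fb g \<le> sqrt ((LINT x|lborel. Ist x) * L1 * L2)"
      unfolding wnorm_def using le by simp
    also have "\<dots> = C * wnorm fb g1 * wnorm fb g2"
      unfolding Cdef wnorm_def L1_def L2_def fbeq \<Phi>_def
      by (simp add: real_sqrt_mult)
    finally show ?thesis using inK by blast
  qed
  show ?thesis using Iint main unfolding Ist_def by blast
qed


end
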